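(* The following set $\mathcal B_4$ of elements is a basis of the complex vector space $\hat{G}_{\Lambda,\Lambda_F}$: (1) all $\bar\Xi^{\lambda_1}_{\lambda_2}\otimes f^{\dot I}_{\dot J}\otimes\Xi^{\lambda_3}_{\lambda_4}$; (2) all $\bar\Xi^{\lambda_1}_{\lambda_2}\otimes l^{\dot I}_{\dot J}$ such that the last integers of $\dot I$ and $\dot J$ are not simultaneously $1$; (3) all $r^{\emptyset}_{\emptyset}\otimes\Xi^{\lambda_1}_{\lambda_2}$ with $\lambda_1\ne1$ or $\lambda_2\ne1$; (4) all $r^{I}_{\emptyset}\otimes\Xi^{\lambda_1}_{\lambda_2}$ with $\lambda_1\ne1$, or $\lambda_2\ne1$, or the first integer of $I$ not equal to $1$; (5) all $r^{\emptyset}_{J}\otimes\Xi^{\lambda_1}_{\lambda_2}$ with $\lambda_1\ne1$, or $\lambda_2\ne1$, or the first integer of $J$ not equal to $1$; (6) all $r^{I}_{J}\otimes\Xi^{\lambda_1}_{\lambda_2}$ such that the first integers of $I$ and $J$ are not simultaneously $1$; (7) $\sigma^{\emptyset}_{\emptyset}$, all $\sigma^{I}_{\emptyset}$ and all $\sigma^{\emptyset}_{J}$; (8) all $\sigma^{I}_{J}$ such that the first integers of $I$ and $J$ are not simultaneously $1$ and the last integers of $I$ and $J$ are not simultaneously $1$. Here $\dot I,\dot J$ range over all sequences, $I,J$ over non-empty sequences, and the $\lambda_i$ over $\{1,\dots,\Lambda_F\}$.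
   Context: Fix positive integers $\Lambda,\Lambda_F$. A sequence $\dot I=i_1\cdots i_a$ is a finite, possibly empty, sequence of integers in $\{1,\dots,\Lambda\}$; $\emptyset$ is the empty sequence, undotted letters $I,J$ denote non-empty sequences, juxtaposition denotes concatenation, and $\delta^{\dot I}_{\dot J}$ is $1$ if $\dot I=\dot J$ and $0$ otherwise (similarly for integers). For a sequence with a condition on "a" (the same) integer position in "both" sequences, an empty sequence has no first or last integer. Let $\mathcal{T}_o$ be the complex vector space with basis the symbols $\bar\phi^{\lambda_1}\otimes s^{\dot K}\otimes\phi^{\lambda_2}$, $1\le\lambda_1,\lambda_2\le\Lambda_F$, $\dot K$ any sequence. For all sequences $\dot I,\dot J$ and all $\lambda_i\in\{1,\dots,\Lambda_F\}$ define linear operators on $\mathcal{T}_o$ (each written as a single symbol): first kind: $\bar\Xi^{\lambda_1}_{\lambda_2}\otimes f^{\dot I}_{\dot J}\otimes\Xi^{\lambda_3}_{\lambda_4}(\bar\phi^{\lambda_5}\otimes s^{\dot K}\otimes\phi^{\lambda_6})=\delta^{\lambda_5}_{\lambda_2}\delta^{\dot K}_{\dot J}\delta^{\lambda_6}_{\lambda_4}\,\bar\phi^{\lambda_1}\otimes s^{\dot I}\otimes\phi^{\lambda_3}$; second kind: $\bar\Xi^{\lambda_1}_{\lambda_2}\otimes l^{\dot I}_{\dot J}(\bar\phi^{\lambda_3}\otimes s^{\dot K}\otimes\phi^{\lambda_4})=\delta^{\lambda_3}_{\lambda_2}\sum_{\dot K_1\dot K_2=\dot K}\delta^{\dot K_1}_{\dot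 J}\,\bar\phi^{\lambda_1}\otimes s^{\dot I\dot K_2}\otimes\phi^{\lambda_4}$; third kind: $r^{\dot I}_{\dot J}\otimes\Xi^{\lambda_1}_{\lambda_2}(\bar\phi^{\lambda_3}\otimes s^{\dot K}\otimes\phi^{\lambda_4})=\delta^{\lambda_4}_{\lambda_2}\sum_{\dot K_1\dot K_2=\dot K}\delta^{\dot K_2}_{\dot J}\,\bar\phi^{\lambda_3}\otimes s^{\dot K_1\dot I}\otimes\phi^{\lambda_1}$; fourth kind: $\sigma^{\dot I}_{\dot J}(\bar\phi^{\lambda_1}\otimes s^{\dot K}\otimes\phi^{\lambda_2})=\sum_{\dot K_1\dot K_2\dot K_3=\dot K}\delta^{\dot K_2}_{\dot J}\,\bar\phi^{\lambda_1}\otimes s^{\dot K_1\dot I\dot K_3}\otimes\phi^{\lambda_2}$; sums run over all ways to write $\dot K$ as a concatenation of possibly empty sequences. The open string algebra $\hat{G}_{\Lambda,\Lambda_F}$ is the complex Lie algebra (commutator bracket) of operators on $\mathcal{T}_o$ spanned by all operators of these four kinds. In item (2), "the last integers of $\dot I$ and $\dot J$ are not simultaneously 1" holds in particular when one of them is empty. *)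

theory Defs
  imports "HOL-Analysis.Analysis" "HOL-Library.Function_Algebras"
begin

(* A basis element  phibar^a \<otimes> s^K \<otimes> phi^b  of T_o is encoded as the triple (a, K, b). *)
type_synonym bvec = "nat \<times> nat list \<times> nat"

(* A linear operator on T_o is encoded by its matrix: A x y = coefficient of the basis
   element y in the image of the basis element x.  (Linear maps on T_o correspond
   bijectively to such column-finite matrices on the basis.) *)
type_synonym oper = "bvec \<Rightarrow> bvec \<Rightarrow> complex"

definition opscale :: "complex \<Rightarrow> oper \<Rightarrow> oper" where
  "opscale c A = (\<lambda>x y. c * A x y)"

definition seqs :: "nat \<Rightarrow> nat list set" where
  "seqs \<Lambda> = {K. set K \<subseteq> {1..\<Lambda>}}"

definition valid :: "nat \<Rightarrow> nat \<Rightarrow> bvec \<Rightarrow> bool" where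
  "valid \<Lambda> \<Lambda>F x = (case x of (a, K, b) \<Rightarrow> a \<in> {1..\<Lambda>F} \<and> K \<in> seqs \<Lambda> \<and> b \<in> {1..\<Lambda>F})"

(* first kind: Xibar^l1_l2 \<otimes> f^I_J \<otimes> Xi^l3_l4 *)
definition opF :: "nat \<Rightarrow> nat \<Rightarrow> nat \<Rightarrow> nat \<Rightarrow> nat list \<Rightarrow> nat list \<Rightarrow> nat \<Rightarrow> nat \<Rightarrow> oper" where
  "opF \<Lambda> \<Lambda>F l1 l2 I J l3 l4 = (\<lambda>(a, K, b) (c, M, d).
     if valid \<Lambda> \<Lambda>F (a, K, b) \<and> a = l2 \<and> K = J \<and> b = l4 \<and> c = l1 \<and> M = I \<and> d = l3
     then 1 else 0)"

(* second kind: Xibar^l1_l2 \<otimes> l^I_J *)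
definition opL :: "nat \<Rightarrow> nat \<Rightarrow> nat \<Rightarrow> nat \<Rightarrow> nat list \<Rightarrow> nat list \<Rightarrow> oper" where
  "opL \<Lambda> \<Lambda>F l1 l2 I J = (\<lambda>(a, K, b) (c, M, d).
     if valid \<Lambda> \<Lambda>F (a, K, b) \<and> a = l2 \<and> c = l1 \<and> d = b
     then of_nat (card {(K1, K2). K1 @ K2 = K \<and> K1 = J \<and> M = I @ K2}) else 0)"

(* third kind: r^I_J \<otimes> Xi^l1_l2 *)
definition opR :: "nat \<Rightarrow> nat \<Rightarrow> nat list \<Rightarrow> nat list \<Rightarrow> nat \<Rightarrow> nat \<Rightarrow> oper" where
  "opR \<Lambda> \<Lambda>F I J l1 l2 = (\<lambda>(a, K, b) (c, M, d).
     if valid \<Lambda> \<Lambda>F (a, K, b) \<and> b = l2 \<and> c = a \<and> d = l1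
     then of_nat (card {(K1, K2). K1 @ K2 = K \<and> K2 = J \<and> M = K1 @ I}) else 0)"

definition opS :: "nat \<Rightarrow> nat \<Rightarrow> nat list \<Rightarrow> nat list \<Rightarrow> oper" where
  "opS \<Lambda> \<Lambda>F I J = (\<lambda>(a, K, b) (c, M, d).
     if valid \<Lambda> \<Lambda>F (a, K, b) \<and> c = a \<and> d = b
     then of_nat (card {(K1, K2, K3). K1 @ K2 @ K3 = K \<and> K2 = J \<and> M = K1 @ I @ K3}) else 0)"

definition all_ops :: "nat \<Rightarrow> nat \<Rightarrow> oper set" where
  "all_ops \<Lambda> \<Lambda>F =
     {opF \<Lambda> \<Lambda>F l1 l2 I J l3 l4 | l1 l2 I J l3 l4.
        l1 \<in> {1..\<Lambda>F} \<and> l2 \<in> {1..\<Lambda>F} \<and> l3 \<in> {1..\<Lambda>F} \<and> l4 \<in> {1..\<Lambda>F} \<and> I \<in> seqs \<Lambda> \<and> J \<in> seqs \<Lambda>}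
   \<union> {opL \<Lambda> \<Lambda>F l1 l2 I J | l1 l2 I J.
        l1 \<in> {1..\<Lambda>F} \<and> l2 \<in> {1..\<Lambda>F} \<and> I \<in> seqs \<Lambda> \<and> J \<in> seqs \<Lambda>}
   \<union> {opR \<Lambda> \<Lambda>F I J l1 l2 | I J l1 l2.
        l1 \<in> {1..\<Lambda>F} \<and> l2 \<in> {1..\<Lambda>F} \<and> I \<in> seqs \<Lambda> \<and> J \<in> seqs \<Lambda>}
   \<union> {opS \<Lambda> \<Lambda>F I J | I J. I \<in> seqs \<Lambda> \<and> J \<in> seqs \<Lambda>}"

definition Ghat :: "nat \<Rightarrow> nat \<Rightarrow> oper set" where
  "Ghat \<Lambda> \<Lambda>F = module.span opscale (all_ops \<Lambda> \<Lambda>F)"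

(* "the last integers of I and J are simultaneously 1" (false if one is empty) *)
definition last_both_one :: "nat list \<Rightarrow> nat list \<Rightarrow> bool" where
  "last_both_one I J \<longleftrightarrow> I \<noteq> [] \<and> J \<noteq> [] \<and> last I = 1 \<and> last J = 1"

definition first_both_one :: "nat list \<Rightarrow> nat list \<Rightarrow> bool" where
  "first_both_one I J \<longleftrightarrow> I \<noteq> [] \<and> J \<noteq> [] \<and> hd I = 1 \<and> hd J = 1"

definition B4 :: "nat \<Rightarrow> nat \<Rightarrow> oper set" where
  "B4 \<Lambda> \<Lambda>F =
     \<comment> \<open>(1)\<close>
     {opF \<Lambda> \<Lambda>F l1 l2 I J l3 l4 | l1 l2 I J l3 l4.
        l1 \<in> {1..\<Lambda>F} \<and> l2 \<in> {1..\<Lambda>F} \<and> l3 \<in> {1..\<Lambda>F} \<and> l4 \<in> {1..\<Lambda>F} \<and> I \<in> seqs \<Lambda> \<and> J \<in> seqs \<Lambda>}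
     \<comment> \<open>(2)\<close>
   \<union> {opL \<Lambda> \<Lambda>F l1 l2 I J | l1 l2 I J.
        l1 \<in> {1..\<Lambda>F} \<and> l2 \<in> {1..\<Lambda>F} \<and> I \<in> seqs \<Lambda> \<and> J \<in> seqs \<Lambda> \<and> \<not> last_both_one I J}
     \<comment> \<open>(3)\<close>
   \<union> {opR \<Lambda> \<Lambda>F [] [] l1 l2 | l1 l2.
        l1 \<in> {1..\<Lambda>F} \<and> l2 \<in> {1..\<Lambda>F} \<and> (l1 \<noteq> 1 \<or> l2 \<noteq> 1)}
     \<comment> \<open>(4)\<close>
   \<union> {opR \<Lambda> \<Lambda>F I [] l1 l2 | I l1 l2.
        l1 \<in> {1..\<Lambda>F} \<and> l2 \<in> {1..\<Lambda>F} \<and> I \<in> seqs \<Lambda> \<and> I \<noteq> [] \<and> (l1 \<noteq> 1 \<or> l2 \<noteq> 1 \<or> hd I \<noteq> 1)}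
     \<comment> \<open>(5)\<close>
   \<union> {opR \<Lambda> \<Lambda>F [] J l1 l2 | J l1 l2.
        l1 \<in> {1..\<Lambda>F} \<and> l2 \<in> {1..\<Lambda>F} \<and> J \<in> seqs \<Lambda> \<and> J \<noteq> [] \<and> (l1 \<noteq> 1 \<or> l2 \<noteq> 1 \<or> hd J \<noteq> 1)}
     \<comment> \<open>(6)\<close>
   \<union> {opR \<Lambda> \<Lambda>F I J l1 l2 | I J l1 l2.
        l1 \<in> {1..\<Lambda>F} \<and> l2 \<in> {1..\<Lambda>F} \<and> I \<in> seqs \<Lambda> \<and> J \<in> seqs \<Lambda> \<and> I \<noteq> [] \<and> J \<noteq> []
        \<and> \<not> first_both_one I J}
     \<comment> \<open>(7)\<close>
   \<union> {opS \<Lambda> \<Lambda>F [] []}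
   \<union> {opS \<Lambda> \<Lambda>F I [] | I. I \<in> seqs \<Lambda> \<and> I \<noteq> []}
   \<union> {opS \<Lambda> \<Lambda>F [] J | J. J \<in> seqs \<Lambda> \<and> J \<noteq> []}
     \<comment> \<open>(8)\<close>
   \<union> {opS \<Lambda> \<Lambda>F I J | I J. I \<in> seqs \<Lambda> \<and> J \<in> seqs \<Lambda> \<and> I \<noteq> [] \<and> J \<noteq> []
        \<and> \<not> first_both_one I J \<and> \<not> last_both_one I J}"

end

theory Submission
  imports Defs
begin

interpretation Op: module opscale
  by standard (auto simp: opscale_def fun_eq_iff algebra_simps)

lemma sum_app: "(\<Sum>a\<in>A. f a) x = (\<Sum>a\<in>A. f a x)"
  by (induction A rule: infinite_finite_induct) auto

definition Pf :: "nat list \<Rightarrow> nat list \<Rightarrow> nat list \<Rightarrow> nat list \<Rightarrow> bool" where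
  "Pf I J K M \<longleftrightarrow> (\<exists>X. K = J @ X \<and> M = I @ X)"

definition Qf :: "nat list \<Rightarrow> nat list \<Rightarrow> nat list \<Rightarrow> nat list \<Rightarrow> bool" where
  "Qf I J K M \<longleftrightarrow> (\<exists>X. K = X @ J \<and> M = X @ I)"

fun cnt :: "nat list \<Rightarrow> nat list \<Rightarrow> nat list \<Rightarrow> nat list \<Rightarrow> nat" where
  "cnt I J [] M = (if J = [] \<and> M = I then 1 else 0)"
| "cnt I J (k#K) M = (if Pf I J (k#K) M then 1 else 0) +
     (case M of [] \<Rightarrow> 0 | m#M' \<Rightarrow> if m = k then cnt I J K M' else 0)"

definition Dset :: "nat list \<Rightarrow> nat list \<Rightarrow> nat list \<Rightarrow> nat list \<Rightarrow> (nat list \<times> nat list \<times> nat list) set" where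
  "Dset I J K M = {(K1, K2, K3). K1 @ K2 @ K3 = K \<and> K2 = J \<and> M = K1 @ I @ K3}"

lemma card_pf: "card {(K1, K2). K1 @ K2 = K \<and> K1 = J \<and> M = I @ K2} = (if Pf I J K M then 1 else 0)"
proof (cases "Pf I J K M")
  case True
  then obtain X where X: "K = J @ X" "M = I @ X" unfolding Pf_def by blast
  have "{(K1, K2). K1 @ K2 = K \<and> K1 = J \<and> M = I @ K2} = {(J, X)}" using X by auto
  then show ?thesis using True by simp
next
  case False
  have E: "{(K1, K2). K1 @ K2 = K \<and> K1 = J \<and> M = I @ K2} = {}" using False unfolding Pf_def by auto
  show ?thesis unfolding E using False by simp
qed

lemma card_qf: "card {(K1, K2). K1 @ K2 = K \<and> K2 = J \<and> M = K1 @ I} = (if Qf I J K M then 1 else 0)"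
proof (cases "Qf I J K M")
  case True
  then obtain X where X: "K = X @ J" "M = X @ I" unfolding Qf_def by blast
  have "{(K1, K2). K1 @ K2 = K \<and> K2 = J \<and> M = K1 @ I} = {(X, J)}" using X by auto
  then show ?thesis using True by simp
next
  case False
  have E: "{(K1, K2). K1 @ K2 = K \<and> K2 = J \<and> M = K1 @ I} = {}" using False unfolding Qf_def by auto
  show ?thesis unfolding E using False by simp
qed

lemma Dset_finite: "finite (Dset I J K M)"
proof -
  have "Dset I J K M \<subseteq> (\<lambda>i. (take i K, J, drop (i + length J) K)) ` {0..length K}"
  proof
    fix z assume "z \<in> Dset I J K M"
    then obtain K1 K3 where z: "z = (K1, J, K3)" "K1 @ J @ K3 = K" unfolding Dset_def by auto
    then show "z \<in> (\<lambda>i. (take i K, J, drop (i + length J) K)) ` {0..length K}"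
      by (intro image_eqI[where x="length K1"]) auto
  qed
  then show ?thesis by (rule finite_subset) auto
qed

lemma Dset_Nil: "Dset I J [] M = (if J = [] \<and> M = I then {([], [], [])} else {})"
  unfolding Dset_def by auto

lemma app_drop: "J @ K3 = L \<Longrightarrow> K3 = drop (length J) L"
  by auto

lemma Dset_Cons: "Dset I J (k#K) M =
   {z. z = ([], J, drop (length J) (k#K)) \<and> Pf I J (k#K) M} \<union>
   (case M of [] \<Rightarrow> {} | m#M' \<Rightarrow> if m = k then (\<lambda>(K1,K2,K3). (k#K1, K2, K3)) ` Dset I J K M' else {})"
  (is "?L = ?A \<union> ?B")
proof (rule set_eqI)
  fix z :: "nat list \<times> nat list \<times> nat list"
  obtain K1 K2 K3 where zz: "z = (K1, K2, K3)" by (cases z) auto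
  show "z \<in> ?L \<longleftrightarrow> z \<in> ?A \<union> ?B"
  proof (cases K1)
    case Nil
    then show ?thesis using zz
      by (cases M) (auto simp: Dset_def Pf_def intro: app_drop)
  next
    case (Cons h K1')
    then show ?thesis using zz
      by (cases M) (auto simp: Dset_def Pf_def)
  qed
qed

lemma card_Dset: "card (Dset I J K M) = cnt I J K M"
proof (induction K arbitrary: M)
  case Nil
  then show ?case by (simp add: Dset_Nil)
next
  case (Cons k K)
  let ?A = "{z. z = ([], J, drop (length J) (k#K)) \<and> Pf I J (k#K) M}"
  let ?B = "(case M of [] \<Rightarrow> {} | m#M' \<Rightarrow> if m = k then (\<lambda>(K1,K2,K3). (k#K1, K2, K3)) ` Dset I J K M' else {})"
  have fA: "finite ?A" by simp
  have fB: "finite ?B" by (cases M) (auto simp: Dset_finite)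
  have disj: "?A \<inter> ?B = {}" by (cases M) auto
  have cA: "card ?A = (if Pf I J (k#K) M then 1 else 0)" by auto
  have cB: "card ?B = (case M of [] \<Rightarrow> 0 | m#M' \<Rightarrow> if m = k then cnt I J K M' else 0)"
  proof (cases M)
    case Nil then show ?thesis by simp
  next
    case (Cons m M')
    have inj: "inj_on (\<lambda>(K1,K2,K3). (k#K1, K2, K3)) (Dset I J K M')"
      by (auto simp: inj_on_def)
    show ?thesis using Cons Cons.IH card_image[OF inj] by simp
  qed
  show ?case unfolding Dset_Cons card_Un_disjoint[OF fA fB disj] cA cB by simp
qed

lemma opF_app: "opF \<Lambda> \<Lambda>F l1 l2 I J l3 l4 (a,K,b) (c,M,d) =
  (if valid \<Lambda> \<Lambda>F (a,K,b) \<and> a = l2 \<and> K = J \<and> b = l4 \<and> c = l1 \<and> M = I \<and> d = l3 then 1 else 0)"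
  by (simp add: opF_def)

lemma opL_app: "opL \<Lambda> \<Lambda>F l1 l2 I J (a,K,b) (c,M,d) =
  (if valid \<Lambda> \<Lambda>F (a,K,b) \<and> a = l2 \<and> c = l1 \<and> d = b \<and> Pf I J K M then 1 else 0)"
  by (simp add: opL_def card_pf)

lemma opR_app: "opR \<Lambda> \<Lambda>F I J l1 l2 (a,K,b) (c,M,d) =
  (if valid \<Lambda> \<Lambda>F (a,K,b) \<and> b = l2 \<and> c = a \<and> d = l1 \<and> Qf I J K M then 1 else 0)"
  by (simp add: opR_def card_qf)

lemma opS_app: "opS \<Lambda> \<Lambda>F I J (a,K,b) (c,M,d) =
  (if valid \<Lambda> \<Lambda>F (a,K,b) \<and> c = a \<and> d = b then of_nat (cnt I J K M) else 0)"
proof -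
  have "{(K1, K2, K3). K1 @ K2 @ K3 = K \<and> K2 = J \<and> M = K1 @ I @ K3} = Dset I J K M"
    unfolding Dset_def by simp
  then show ?thesis by (simp add: opS_def card_Dset)
qed

lemma Pf_Nil: "Pf I J [] M \<longleftrightarrow> J = [] \<and> M = I"
  by (auto simp: Pf_def)

lemma cnt_left: "cnt I J K M = (if Pf I J K M then 1 else 0) +
   (if K \<noteq> [] \<and> M \<noteq> [] \<and> hd K = hd M then cnt I J (tl K) (tl M) else 0)"
  by (cases K; cases M) (auto simp: Pf_Nil)

lemma Dset_rev: "Dset (rev I) (rev J) (rev K) (rev M) = (\<lambda>(a,b,c). (rev c, rev b, rev a)) ` Dset I J K M"
proof (rule set_eqI)
  fix z :: "nat list \<times> nat list \<times> nat list"
  obtain A B C where z: "z = (A, B, C)" by (cases z) auto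
  show "z \<in> Dset (rev I) (rev J) (rev K) (rev M) \<longleftrightarrow> z \<in> (\<lambda>(a,b,c). (rev c, rev b, rev a)) ` Dset I J K M"
  proof
    assume "z \<in> Dset (rev I) (rev J) (rev K) (rev M)"
    then have h: "A @ B @ C = rev K" "B = rev J" "rev M = A @ rev I @ C" using z by (auto simp: Dset_def)
    have "(rev C, rev B, rev A) \<in> Dset I J K M"
    proof -
      have "K = rev (A @ B @ C)" using h(1) by simp
      moreover have "M = rev (A @ rev I @ C)" by (metis h(3) rev_rev_ident)
      ultimately show ?thesis using h(2) by (simp add: Dset_def)
    qed
    then show "z \<in> (\<lambda>(a,b,c). (rev c, rev b, rev a)) ` Dset I J K M"
      using z by (intro image_eqI[where x="(rev C, rev B, rev A)"]) auto
  next
    assume "z \<in> (\<lambda>(a,b,c). (rev c, rev b, rev a)) ` Dset I J K M"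
    then obtain A' B' C' where w: "(A', B', C') \<in> Dset I J K M" "z = (rev C', rev B', rev A')" by auto
    then show "z \<in> Dset (rev I) (rev J) (rev K) (rev M)" by (auto simp: Dset_def)
  qed
qed

lemma cnt_rev: "cnt (rev I) (rev J) (rev K) (rev M) = cnt I J K M"
proof -
  have inj: "inj_on (\<lambda>(a,b,c). (rev c, rev b, rev (a::nat list))) (Dset I J K M)"
    by (auto simp: inj_on_def)
  have "cnt (rev I) (rev J) (rev K) (rev M) = card (Dset (rev I) (rev J) (rev K) (rev M))"
    by (simp only: card_Dset)
  also have "\<dots> = card ((\<lambda>(a,b,c). (rev c, rev b, rev a)) ` Dset I J K M)"
    by (simp only: Dset_rev)
  also have "\<dots> = card (Dset I J K M)" by (rule card_image[OF inj])
  also have "\<dots> = cnt I J K M" by (rule card_Dset)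
  finally show ?thesis .
qed

lemma Pf_rev: "Pf (rev I) (rev J) (rev K) (rev M) \<longleftrightarrow> Qf I J K M"
proof
  assume "Pf (rev I) (rev J) (rev K) (rev M)"
  then obtain X where "rev K = rev J @ X" "rev M = rev I @ X" by (auto simp: Pf_def)
  then have "K = rev X @ J" "M = rev X @ I" by (metis rev_append rev_rev_ident)+
  then show "Qf I J K M" by (auto simp: Qf_def)
next
  assume "Qf I J K M"
  then obtain X where "K = X @ J" "M = X @ I" by (auto simp: Qf_def)
  then show "Pf (rev I) (rev J) (rev K) (rev M)" by (auto simp: Pf_def)
qed

lemma Qf_rev: "Qf (rev I) (rev J) (rev K) (rev M) \<longleftrightarrow> Pf I J K M"
  using Pf_rev[of "rev I" "rev J" "rev K" "rev M"] by simp

lemma tl_rev: "tl (rev xs) = rev (butlast xs)"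
  by (induction xs) (auto simp: butlast_append)

lemma cnt_right: "cnt I J K M = (if Qf I J K M then 1 else 0) +
   (if K \<noteq> [] \<and> M \<noteq> [] \<and> last K = last M then cnt I J (butlast K) (butlast M) else 0)"
proof -
  have "cnt I J K M = cnt (rev I) (rev J) (rev K) (rev M)" by (simp add: cnt_rev)
  also have "\<dots> = (if Pf (rev I) (rev J) (rev K) (rev M) then 1 else 0) +
   (if rev K \<noteq> [] \<and> rev M \<noteq> [] \<and> hd (rev K) = hd (rev M) then cnt (rev I) (rev J) (tl (rev K)) (tl (rev M)) else 0)"
    by (rule cnt_left)
  also have "\<dots> = (if Qf I J K M then 1 else 0) +
   (if K \<noteq> [] \<and> M \<noteq> [] \<and> last K = last M then cnt I J (butlast K) (butlast M) else 0)"
    by (simp add: Pf_rev tl_rev cnt_rev hd_rev)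
  finally show ?thesis .
qed

lemma Pf_Cons_Cons: "Pf (k#I) (k#J) K M \<longleftrightarrow> K \<noteq> [] \<and> M \<noteq> [] \<and> hd K = k \<and> hd M = k \<and> Pf I J (tl K) (tl M)"
  by (cases K; cases M) (auto simp: Pf_def)

lemma sum_ind_eq: "finite A \<Longrightarrow> h \<in> A \<Longrightarrow> (\<Sum>k\<in>A. (if k = h \<and> P then 1 else 0)::'a::semiring_1) = (if P then 1 else 0)"
  by (cases P) (simp_all add: sum.delta')

lemma sum_if_const: "(\<Sum>k\<in>A. if P then f k else 0) = (if P then (\<Sum>k\<in>A. f k) else 0)"
  by auto

lemma cnt_Cons_kk: "cnt (k#I) (k#J) (h#K) M = (if k = h \<and> M \<noteq> [] \<and> hd M = h \<and> Pf I J K (tl M) then 1 else 0) +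
    (if M \<noteq> [] \<and> hd M = h then cnt (k#I) (k#J) K (tl M) else 0)"
proof (cases M)
  case Nil
  then show ?thesis by (simp add: Pf_def)
next
  case (Cons m M')
  have "Pf (k#I) (k#J) (h#K) M \<longleftrightarrow> k = h \<and> m = h \<and> Pf I J K M'"
    using Cons by (auto simp: Pf_def)
  then show ?thesis using Cons by simp
qed

lemma cnt_sumL: "set K \<subseteq> A \<Longrightarrow> finite A \<Longrightarrow> (\<Sum>k\<in>A. cnt (k#I) (k#J) K M) =
   (if K \<noteq> [] \<and> M \<noteq> [] \<and> hd K = hd M then cnt I J (tl K) (tl M) else 0)"
proof (induction K arbitrary: M)
  case Nil
  then show ?case by simp
next
  case (Cons h K)
  have hA: "h \<in> A" using Cons.prems by auto
  have "(\<Sum>k\<in>A. cnt (k#I) (k#J) (h#K) M) =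
     (\<Sum>k\<in>A. (if k = h \<and> M \<noteq> [] \<and> hd M = h \<and> Pf I J K (tl M) then 1 else 0) +
           (if M \<noteq> [] \<and> hd M = h then cnt (k#I) (k#J) K (tl M) else 0))"
    by (rule sum.cong[OF refl cnt_Cons_kk])
  also have "\<dots> = (if M \<noteq> [] \<and> hd M = h \<and> Pf I J K (tl M) then 1 else 0) +
        (if M \<noteq> [] \<and> hd M = h then (\<Sum>k\<in>A. cnt (k#I) (k#J) K (tl M)) else 0)"
    using hA Cons.prems(2) by (simp only: sum.distrib sum_ind_eq sum_if_const)
  also have "\<dots> = (if M \<noteq> [] \<and> hd M = h then cnt I J K (tl M) else 0)"
  proof (cases "M \<noteq> [] \<and> hd M = h")
    case True
    have sK: "set K \<subseteq> A" using Cons.prems(1) by simp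
    have IH: "(\<Sum>k\<in>A. cnt (k#I) (k#J) K (tl M)) =
      (if K \<noteq> [] \<and> tl M \<noteq> [] \<and> hd K = hd (tl M) then cnt I J (tl K) (tl (tl M)) else 0)"
      by (rule Cons.IH[OF sK Cons.prems(2)])
    have L: "cnt I J K (tl M) = (if Pf I J K (tl M) then 1 else 0) +
      (if K \<noteq> [] \<and> tl M \<noteq> [] \<and> hd K = hd (tl M) then cnt I J (tl K) (tl (tl M)) else 0)"
      by (rule cnt_left)
    show ?thesis using True by (simp only: IH L if_True simp_thms)
  next
    case False
    then show ?thesis by auto
  qed
  finally show ?case by simp
qed

lemma set_rev_sub: "set K \<subseteq> A \<Longrightarrow> set (rev K) \<subseteq> A" by simp

lemma cnt_sumR: "set K \<subseteq> A \<Longrightarrow> finite A \<Longrightarrow> (\<Sum>k\<in>A. cnt (I@[k]) (J@[k]) K M) =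
   (if K \<noteq> [] \<and> M \<noteq> [] \<and> last K = last M then cnt I J (butlast K) (butlast M) else 0)"
proof -
  assume a: "set K \<subseteq> A" "finite A"
  have "(\<Sum>k\<in>A. cnt (I@[k]) (J@[k]) K M) = (\<Sum>k\<in>A. cnt (k # rev I) (k # rev J) (rev K) (rev M))"
  proof (rule sum.cong[OF refl])
    fix k show "cnt (I@[k]) (J@[k]) K M = cnt (k # rev I) (k # rev J) (rev K) (rev M)"
      using cnt_rev[of "k#rev I" "k#rev J" "rev K" "rev M"] by simp
  qed
  also have "\<dots> = (if rev K \<noteq> [] \<and> rev M \<noteq> [] \<and> hd (rev K) = hd (rev M) then cnt (rev I) (rev J) (tl (rev K)) (tl (rev M)) else 0)"
    using a by (intro cnt_sumL) auto
  also have "\<dots> = (if K \<noteq> [] \<and> M \<noteq> [] \<and> last K = last M then cnt I J (butlast K) (butlast M) else 0)"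
    by (simp add: tl_rev cnt_rev hd_rev)
  finally show ?thesis .
qed



lemma Pf_snoc: "Pf (I@[k]) (J@[k]) K M \<longleftrightarrow> Pf I J K M \<and> length J < length K \<and> k = K ! length J"
proof
  assume "Pf (I@[k]) (J@[k]) K M"
  then obtain X where X: "K = J @ k # X" "M = I @ k # X" by (auto simp: Pf_def)
  then show "Pf I J K M \<and> length J < length K \<and> k = K ! length J"
    by (auto simp: Pf_def nth_append)
next
  assume a: "Pf I J K M \<and> length J < length K \<and> k = K ! length J"
  then obtain X where X: "K = J @ X" "M = I @ X" by (auto simp: Pf_def)
  with a obtain X' where "X = k # X'" by (cases X) (auto simp: nth_append)
  with X show "Pf (I@[k]) (J@[k]) K M" by (auto simp: Pf_def)
qed

lemma Pf_eqlen: "Pf I J K M \<Longrightarrow> \<not> length J < length K \<Longrightarrow> K = J \<and> M = I"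
  by (auto simp: Pf_def)

lemma Qf_cons: "Qf (k#I) (k#J) K M \<longleftrightarrow> Qf I J K M \<and> length J < length K \<and> k = K ! (length K - length J - 1)"
proof
  assume "Qf (k#I) (k#J) K M"
  then obtain X where X: "K = X @ k # J" "M = X @ k # I" by (auto simp: Qf_def)
  then show "Qf I J K M \<and> length J < length K \<and> k = K ! (length K - length J - 1)"
    by (auto simp: Qf_def nth_append)
next
  assume a: "Qf I J K M \<and> length J < length K \<and> k = K ! (length K - length J - 1)"
  then obtain X where X: "K = X @ J" "M = X @ I" by (auto simp: Qf_def)
  with a have "X \<noteq> []" by auto
  then obtain X' y where Xy: "X = X' @ [y]" by (cases X rule: rev_cases) auto
  with a X have "y = k" by (auto simp: nth_append)
  with X Xy show "Qf (k#I) (k#J) K M" by (auto simp: Qf_def)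
qed

lemma Qf_eqlen: "Qf I J K M \<Longrightarrow> \<not> length J < length K \<Longrightarrow> K = J \<and> M = I"
  by (auto simp: Qf_def)

lemma valid_iff: "valid \<Lambda> \<Lambda>F (a,K,b) \<longleftrightarrow> a \<in> {1..\<Lambda>F} \<and> set K \<subseteq> {1..\<Lambda>} \<and> b \<in> {1..\<Lambda>F}"
  by (simp add: valid_def seqs_def)

lemma nth_in: "set K \<subseteq> A \<Longrightarrow> i < length K \<Longrightarrow> K ! i \<in> A"
  using nth_mem by blast

lemma sum_ind1: "finite A \<Longrightarrow> (\<Sum>k\<in>A. (if P \<and> k = e then 1 else 0)::complex) = (if P \<and> e \<in> A then 1 else 0)"
  by (cases P) (simp_all add: sum.delta')

lemma rel_L: "opL \<Lambda> \<Lambda>F l1 l2 I J = (\<Sum>mu\<in>{1..\<Lambda>F}. opF \<Lambda> \<Lambda>F l1 l2 I J mu mu) + (\<Sum>k\<in>{1..\<Lambda>}. opL \<Lambda> \<Lambda>F l1 l2 (I@[k]) (J@[k]))"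
proof (intro ext)
  fix x y :: bvec
  obtain a K b where x: "x = (a,K,b)" by (cases x) auto
  obtain c M d where y: "y = (c,M,d)" by (cases y) auto
  let ?C = "valid \<Lambda> \<Lambda>F (a,K,b) \<and> a = l2 \<and> c = l1 \<and> d = b"
  have F: "(\<Sum>mu\<in>{1..\<Lambda>F}. opF \<Lambda> \<Lambda>F l1 l2 I J mu mu x y) = (if ?C \<and> K = J \<and> M = I then 1 else 0)"
  proof -
    have "(\<Sum>mu\<in>{1..\<Lambda>F}. opF \<Lambda> \<Lambda>F l1 l2 I J mu mu x y) = (\<Sum>mu\<in>{1..\<Lambda>F}. if (valid \<Lambda> \<Lambda>F (a,K,b) \<and> a = l2 \<and> K = J \<and> c = l1 \<and> M = I \<and> d = b) \<and> mu = b then 1 else 0)"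
      by (rule sum.cong) (auto simp: x y opF_app)
    also have "\<dots> = (if ?C \<and> K = J \<and> M = I then 1 else 0)"
      by (subst sum_ind1) (auto simp: valid_iff)
    finally show ?thesis .
  qed
  have L: "(\<Sum>k\<in>{1..\<Lambda>}. opL \<Lambda> \<Lambda>F l1 l2 (I@[k]) (J@[k]) x y) = (if ?C \<and> Pf I J K M \<and> length J < length K then 1 else 0)"
  proof -
    have "(\<Sum>k\<in>{1..\<Lambda>}. opL \<Lambda> \<Lambda>F l1 l2 (I@[k]) (J@[k]) x y) = (\<Sum>k\<in>{1..\<Lambda>}. if (?C \<and> Pf I J K M \<and> length J < length K) \<and> k = K ! length J then 1 else 0)"
      by (rule sum.cong) (auto simp: x y opL_app Pf_snoc)
    also have "\<dots> = (if ?C \<and> Pf I J K M \<and> length J < length K then 1 else 0)"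
      by (subst sum_ind1) (use nth_in[of K "{1..\<Lambda>}" "length J"] in \<open>auto simp: valid_iff\<close>)
    finally show ?thesis .
  qed
  show "opL \<Lambda> \<Lambda>F l1 l2 I J x y = ((\<Sum>mu\<in>{1..\<Lambda>F}. opF \<Lambda> \<Lambda>F l1 l2 I J mu mu) + (\<Sum>k\<in>{1..\<Lambda>}. opL \<Lambda> \<Lambda>F l1 l2 (I@[k]) (J@[k]))) x y"
    unfolding plus_fun_apply sum_app F L using Pf_eqlen[of I J K M]
    by (auto simp: x y opL_app Pf_def)
qed

lemma rel_R: "opR \<Lambda> \<Lambda>F I J l1 l2 = (\<Sum>mu\<in>{1..\<Lambda>F}. opF \<Lambda> \<Lambda>F mu mu I J l1 l2) + (\<Sum>k\<in>{1..\<Lambda>}. opR \<Lambda> \<Lambda>F (k#I) (k#J) l1 l2)"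
proof (intro ext)
  fix x y :: bvec
  obtain a K b where x: "x = (a,K,b)" by (cases x) auto
  obtain c M d where y: "y = (c,M,d)" by (cases y) auto
  let ?C = "valid \<Lambda> \<Lambda>F (a,K,b) \<and> b = l2 \<and> c = a \<and> d = l1"
  have F: "(\<Sum>mu\<in>{1..\<Lambda>F}. opF \<Lambda> \<Lambda>F mu mu I J l1 l2 x y) = (if ?C \<and> K = J \<and> M = I then 1 else 0)"
  proof -
    have "(\<Sum>mu\<in>{1..\<Lambda>F}. opF \<Lambda> \<Lambda>F mu mu I J l1 l2 x y) = (\<Sum>mu\<in>{1..\<Lambda>F}. if (?C \<and> K = J \<and> M = I) \<and> mu = a then 1 else 0)"
      by (rule sum.cong) (auto simp: x y opF_app)
    also have "\<dots> = (if ?C \<and> K = J \<and> M = I then 1 else 0)"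
      by (subst sum_ind1) (auto simp: valid_iff)
    finally show ?thesis .
  qed
  have R: "(\<Sum>k\<in>{1..\<Lambda>}. opR \<Lambda> \<Lambda>F (k#I) (k#J) l1 l2 x y) = (if ?C \<and> Qf I J K M \<and> length J < length K then 1 else 0)"
  proof -
    have "(\<Sum>k\<in>{1..\<Lambda>}. opR \<Lambda> \<Lambda>F (k#I) (k#J) l1 l2 x y) = (\<Sum>k\<in>{1..\<Lambda>}. if (?C \<and> Qf I J K M \<and> length J < length K) \<and> k = K ! (length K - length J - 1) then 1 else 0)"
      by (rule sum.cong) (auto simp: x y opR_app Qf_cons)
    also have "\<dots> = (if ?C \<and> Qf I J K M \<and> length J < length K then 1 else 0)"
    proof -
      have "?C \<and> Qf I J K M \<and> length J < length K \<Longrightarrow> K ! (length K - length J - 1) \<in> {1..\<Lambda>}"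
        by (rule nth_in) (auto simp: valid_iff)
      then show ?thesis by (subst sum_ind1) auto
    qed
    finally show ?thesis .
  qed
  show "opR \<Lambda> \<Lambda>F I J l1 l2 x y = ((\<Sum>mu\<in>{1..\<Lambda>F}. opF \<Lambda> \<Lambda>F mu mu I J l1 l2) + (\<Sum>k\<in>{1..\<Lambda>}. opR \<Lambda> \<Lambda>F (k#I) (k#J) l1 l2)) x y"
    unfolding plus_fun_apply sum_app F R using Qf_eqlen[of I J K M]
    by (auto simp: x y opR_app Qf_def)
qed

lemma rel_S1: "opS \<Lambda> \<Lambda>F I J = (\<Sum>mu\<in>{1..\<Lambda>F}. opL \<Lambda> \<Lambda>F mu mu I J) + (\<Sum>k\<in>{1..\<Lambda>}. opS \<Lambda> \<Lambda>F (k#I) (k#J))"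
proof (intro ext)
  fix x y :: bvec
  obtain a K b where x: "x = (a,K,b)" by (cases x) auto
  obtain c M d where y: "y = (c,M,d)" by (cases y) auto
  let ?C = "valid \<Lambda> \<Lambda>F (a,K,b) \<and> c = a \<and> d = b"
  have L: "(\<Sum>mu\<in>{1..\<Lambda>F}. opL \<Lambda> \<Lambda>F mu mu I J x y) = (if ?C \<and> Pf I J K M then 1 else 0)"
  proof -
    have "(\<Sum>mu\<in>{1..\<Lambda>F}. opL \<Lambda> \<Lambda>F mu mu I J x y) = (\<Sum>mu\<in>{1..\<Lambda>F}. if (?C \<and> Pf I J K M) \<and> mu = a then 1 else 0)"
      by (rule sum.cong) (auto simp: x y opL_app)
    also have "\<dots> = (if ?C \<and> Pf I J K M then 1 else 0)"
      by (subst sum_ind1) (auto simp: valid_iff)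
    finally show ?thesis .
  qed
  have S: "(\<Sum>k\<in>{1..\<Lambda>}. opS \<Lambda> \<Lambda>F (k#I) (k#J) x y) = (if ?C then of_nat (if K \<noteq> [] \<and> M \<noteq> [] \<and> hd K = hd M then cnt I J (tl K) (tl M) else 0) else 0)"
  proof (cases ?C)
    case True
    then have sK: "set K \<subseteq> {1..\<Lambda>}" by (simp add: valid_iff)
    have "(\<Sum>k\<in>{1..\<Lambda>}. opS \<Lambda> \<Lambda>F (k#I) (k#J) x y) = (\<Sum>k\<in>{1..\<Lambda>}. of_nat (cnt (k#I) (k#J) K M))"
      by (rule sum.cong) (use True in \<open>auto simp: x y opS_app\<close>)
    also have "\<dots> = of_nat (\<Sum>k\<in>{1..\<Lambda>}. cnt (k#I) (k#J) K M)" by simp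
    also have "\<dots> = of_nat (if K \<noteq> [] \<and> M \<noteq> [] \<and> hd K = hd M then cnt I J (tl K) (tl M) else 0)"
      by (subst cnt_sumL[OF sK]) auto
    finally show ?thesis using True by simp
  next
    case False
    then show ?thesis by (auto simp: x y opS_app intro!: sum.neutral)
  qed
  have e: "cnt I J K M = (if Pf I J K M then 1 else 0) + (if K \<noteq> [] \<and> M \<noteq> [] \<and> hd K = hd M then cnt I J (tl K) (tl M) else 0)"
    by (rule cnt_left)
  show "opS \<Lambda> \<Lambda>F I J x y = ((\<Sum>mu\<in>{1..\<Lambda>F}. opL \<Lambda> \<Lambda>F mu mu I J) + (\<Sum>k\<in>{1..\<Lambda>}. opS \<Lambda> \<Lambda>F (k#I) (k#J))) x y"
    unfolding plus_fun_apply sum_app L S by (subst x, subst y, subst opS_app, subst e) auto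
qed

lemma rel_S2: "opS \<Lambda> \<Lambda>F I J = (\<Sum>mu\<in>{1..\<Lambda>F}. opR \<Lambda> \<Lambda>F I J mu mu) + (\<Sum>k\<in>{1..\<Lambda>}. opS \<Lambda> \<Lambda>F (I@[k]) (J@[k]))"
proof (intro ext)
  fix x y :: bvec
  obtain a K b where x: "x = (a,K,b)" by (cases x) auto
  obtain c M d where y: "y = (c,M,d)" by (cases y) auto
  let ?C = "valid \<Lambda> \<Lambda>F (a,K,b) \<and> c = a \<and> d = b"
  have R: "(\<Sum>mu\<in>{1..\<Lambda>F}. opR \<Lambda> \<Lambda>F I J mu mu x y) = (if ?C \<and> Qf I J K M then 1 else 0)"
  proof -
    have "(\<Sum>mu\<in>{1..\<Lambda>F}. opR \<Lambda> \<Lambda>F I J mu mu x y) = (\<Sum>mu\<in>{1..\<Lambda>F}. if (?C \<and> Qf I J K M) \<and> mu = b then 1 else 0)"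
      by (rule sum.cong) (auto simp: x y opR_app)
    also have "\<dots> = (if ?C \<and> Qf I J K M then 1 else 0)"
      by (subst sum_ind1) (auto simp: valid_iff)
    finally show ?thesis .
  qed
  have S: "(\<Sum>k\<in>{1..\<Lambda>}. opS \<Lambda> \<Lambda>F (I@[k]) (J@[k]) x y) = (if ?C then of_nat (if K \<noteq> [] \<and> M \<noteq> [] \<and> last K = last M then cnt I J (butlast K) (butlast M) else 0) else 0)"
  proof (cases ?C)
    case True
    then have sK: "set K \<subseteq> {1..\<Lambda>}" by (simp add: valid_iff)
    have "(\<Sum>k\<in>{1..\<Lambda>}. opS \<Lambda> \<Lambda>F (I@[k]) (J@[k]) x y) = (\<Sum>k\<in>{1..\<Lambda>}. of_nat (cnt (I@[k]) (J@[k]) K M))"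
      by (rule sum.cong) (use True in \<open>auto simp: x y opS_app\<close>)
    also have "\<dots> = of_nat (\<Sum>k\<in>{1..\<Lambda>}. cnt (I@[k]) (J@[k]) K M)" by simp
    also have "\<dots> = of_nat (if K \<noteq> [] \<and> M \<noteq> [] \<and> last K = last M then cnt I J (butlast K) (butlast M) else 0)"
      by (subst cnt_sumR[OF sK]) auto
    finally show ?thesis using True by simp
  next
    case False
    then show ?thesis by (auto simp: x y opS_app intro!: sum.neutral)
  qed
  have e: "cnt I J K M = (if Qf I J K M then 1 else 0) + (if K \<noteq> [] \<and> M \<noteq> [] \<and> last K = last M then cnt I J (butlast K) (butlast M) else 0)"
    by (rule cnt_right)
  show "opS \<Lambda> \<Lambda>F I J x y = ((\<Sum>mu\<in>{1..\<Lambda>F}. opR \<Lambda> \<Lambda>F I J mu mu) + (\<Sum>k\<in>{1..\<Lambda>}. opS \<Lambda> \<Lambda>F (I@[k]) (J@[k]))) x y"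
    unfolding plus_fun_apply sum_app R S by (subst x, subst y, subst opS_app, subst e) auto
qed

lemma rel_Id: "(\<Sum>mu\<in>{1..\<Lambda>F}. opR \<Lambda> \<Lambda>F [] [] mu mu) = (\<Sum>mu\<in>{1..\<Lambda>F}. opL \<Lambda> \<Lambda>F mu mu [] [])"
proof (intro ext)
  fix x y :: bvec
  obtain a K b where x: "x = (a,K,b)" by (cases x) auto
  obtain c M d where y: "y = (c,M,d)" by (cases y) auto
  let ?C = "valid \<Lambda> \<Lambda>F (a,K,b) \<and> c = a \<and> d = b \<and> K = M"
  have R: "(\<Sum>mu\<in>{1..\<Lambda>F}. opR \<Lambda> \<Lambda>F [] [] mu mu x y) = (if ?C then 1 else 0)"
  proof -
    have "(\<Sum>mu\<in>{1..\<Lambda>F}. opR \<Lambda> \<Lambda>F [] [] mu mu x y) = (\<Sum>mu\<in>{1..\<Lambda>F}. if ?C \<and> mu = b then 1 else 0)"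
      by (rule sum.cong) (auto simp: x y opR_app Qf_def)
    also have "\<dots> = (if ?C then 1 else 0)"
      by (subst sum_ind1) (auto simp: valid_iff)
    finally show ?thesis .
  qed
  have L: "(\<Sum>mu\<in>{1..\<Lambda>F}. opL \<Lambda> \<Lambda>F mu mu [] [] x y) = (if ?C then 1 else 0)"
  proof -
    have "(\<Sum>mu\<in>{1..\<Lambda>F}. opL \<Lambda> \<Lambda>F mu mu [] [] x y) = (\<Sum>mu\<in>{1..\<Lambda>F}. if ?C \<and> mu = a then 1 else 0)"
      by (rule sum.cong) (auto simp: x y opL_app Pf_def)
    also have "\<dots> = (if ?C then 1 else 0)"
      by (subst sum_ind1) (auto simp: valid_iff)
    finally show ?thesis .
  qed
  show "(\<Sum>mu\<in>{1..\<Lambda>F}. opR \<Lambda> \<Lambda>F [] [] mu mu) x y = (\<Sum>mu\<in>{1..\<Lambda>F}. opL \<Lambda> \<Lambda>F mu mu [] []) x y"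
    unfolding sum_app R L ..
qed



definition Rc :: "nat list \<Rightarrow> nat list \<Rightarrow> nat \<Rightarrow> nat \<Rightarrow> bool" where
  "Rc I J l1 l2 \<longleftrightarrow> \<not> first_both_one I J \<and>
     ((I = [] \<or> J = []) \<longrightarrow> (l1 \<noteq> 1 \<or> l2 \<noteq> 1 \<or> (I \<noteq> [] \<and> hd I \<noteq> 1) \<or> (J \<noteq> [] \<and> hd J \<noteq> 1)))"

definition Sc :: "nat list \<Rightarrow> nat list \<Rightarrow> bool" where
  "Sc I J \<longleftrightarrow> \<not> first_both_one I J \<and> \<not> last_both_one I J"

lemma seqs_Nil[simp]: "[] \<in> seqs \<Lambda>" by (simp add: seqs_def)
lemma seqs_Cons[simp]: "k#I \<in> seqs \<Lambda> \<longleftrightarrow> k \<in> {1..\<Lambda>} \<and> I \<in> seqs \<Lambda>" by (auto simp: seqs_def)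
lemma seqs_app[simp]: "I@J \<in> seqs \<Lambda> \<longleftrightarrow> I \<in> seqs \<Lambda> \<and> J \<in> seqs \<Lambda>" by (auto simp: seqs_def)

lemma F_B4: "l1 \<in> {1..\<Lambda>F} \<Longrightarrow> l2 \<in> {1..\<Lambda>F} \<Longrightarrow> l3 \<in> {1..\<Lambda>F} \<Longrightarrow> l4 \<in> {1..\<Lambda>F} \<Longrightarrow>
  I \<in> seqs \<Lambda> \<Longrightarrow> J \<in> seqs \<Lambda> \<Longrightarrow> opF \<Lambda> \<Lambda>F l1 l2 I J l3 l4 \<in> B4 \<Lambda> \<Lambda>F"
  unfolding B4_def by (rule UnI1, rule UnI1, rule UnI1, rule UnI1, rule UnI1, rule UnI1, rule UnI1, rule UnI1, rule UnI1) blast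

lemma L_B4: "l1 \<in> {1..\<Lambda>F} \<Longrightarrow> l2 \<in> {1..\<Lambda>F} \<Longrightarrow> I \<in> seqs \<Lambda> \<Longrightarrow> J \<in> seqs \<Lambda> \<Longrightarrow>
  \<not> last_both_one I J \<Longrightarrow> opL \<Lambda> \<Lambda>F l1 l2 I J \<in> B4 \<Lambda> \<Lambda>F"
  unfolding B4_def by (rule UnI1, rule UnI1, rule UnI1, rule UnI1, rule UnI1, rule UnI1, rule UnI1, rule UnI1, rule UnI2) blast

lemma R_B4: "l1 \<in> {1..\<Lambda>F} \<Longrightarrow> l2 \<in> {1..\<Lambda>F} \<Longrightarrow> I \<in> seqs \<Lambda> \<Longrightarrow> J \<in> seqs \<Lambda> \<Longrightarrow>
  Rc I J l1 l2 \<Longrightarrow> opR \<Lambda> \<Lambda>F I J l1 l2 \<in> B4 \<Lambda> \<Lambda>F"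
proof -
  assume a: "l1 \<in> {1..\<Lambda>F}" "l2 \<in> {1..\<Lambda>F}" "I \<in> seqs \<Lambda>" "J \<in> seqs \<Lambda>" "Rc I J l1 l2"
  consider "I = [] \<and> J = []" | "I \<noteq> [] \<and> J = []" | "I = [] \<and> J \<noteq> []" | "I \<noteq> [] \<and> J \<noteq> []" by blast
  then show ?thesis
  proof cases
    case 1 show ?thesis unfolding B4_def by (rule UnI1, rule UnI1, rule UnI1, rule UnI1, rule UnI1, rule UnI1, rule UnI1, rule UnI2) (use 1 a in \<open>auto simp: Rc_def first_both_one_def\<close>)
  next
    case 2 show ?thesis unfolding B4_def by (rule UnI1, rule UnI1, rule UnI1, rule UnI1, rule UnI1, rule UnI1, rule UnI2) (use 2 a in \<open>auto simp: Rc_def first_both_one_def\<close>)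
  next
    case 3 show ?thesis unfolding B4_def by (rule UnI1, rule UnI1, rule UnI1, rule UnI1, rule UnI1, rule UnI2) (use 3 a in \<open>auto simp: Rc_def first_both_one_def\<close>)
  next
    case 4 show ?thesis unfolding B4_def by (rule UnI1, rule UnI1, rule UnI1, rule UnI1, rule UnI2) (use 4 a in \<open>auto simp: Rc_def first_both_one_def\<close>)
  qed
qed

lemma S_B4: "I \<in> seqs \<Lambda> \<Longrightarrow> J \<in> seqs \<Lambda> \<Longrightarrow> Sc I J \<Longrightarrow> opS \<Lambda> \<Lambda>F I J \<in> B4 \<Lambda> \<Lambda>F"
proof -
  assume a: "I \<in> seqs \<Lambda>" "J \<in> seqs \<Lambda>" "Sc I J"
  consider "I = [] \<and> J = []" | "I \<noteq> [] \<and> J = []" | "I = [] \<and> J \<noteq> []" | "I \<noteq> [] \<and> J \<noteq> []" by blast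
  then show ?thesis
  proof cases
    case 1 show ?thesis unfolding B4_def by (rule UnI1, rule UnI1, rule UnI1, rule UnI2) (use 1 a in \<open>auto simp: Sc_def\<close>)
  next
    case 2 show ?thesis unfolding B4_def by (rule UnI1, rule UnI1, rule UnI2) (use 2 a in \<open>auto simp: Sc_def\<close>)
  next
    case 3 show ?thesis unfolding B4_def by (rule UnI1, rule UnI2) (use 3 a in \<open>auto simp: Sc_def\<close>)
  next
    case 4 show ?thesis unfolding B4_def by (rule UnI2) (use 4 a in \<open>auto simp: Sc_def\<close>)
  qed
qed

lemma sum_split1: "(1::nat) \<in> A \<Longrightarrow> finite A \<Longrightarrow> (\<Sum>k\<in>A. f k) = f 1 + (\<Sum>k\<in>A-{1}. f k)"
  by (simp add: sum.remove)

lemma solve3: "(A::'a::ab_group_add) = B + (C + D) \<Longrightarrow> C = A - B - D"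
  by (simp add: algebra_simps)

lemma solve4: "(A::'a::ab_group_add) = (C + D) + E \<Longrightarrow> C = A - D - E"
  by (simp add: algebra_simps)

lemma solve2: "(A::'a::ab_group_add) = C + D \<Longrightarrow> C = A - D"
  by (simp add: algebra_simps)

lemma snoc_last: "xs \<noteq> [] \<Longrightarrow> last xs = k \<Longrightarrow> xs = butlast xs @ [k]"
  by (metis append_butlast_last_id)

lemma cons_hd: "xs \<noteq> [] \<Longrightarrow> hd xs = k \<Longrightarrow> xs = k # tl xs"
  by (metis list.collapse)

lemma seqs_butlast: "I \<in> seqs \<Lambda> \<Longrightarrow> butlast I \<in> seqs \<Lambda>"
  by (auto simp: seqs_def dest: in_set_butlastD)

lemma seqs_tl: "I \<in> seqs \<Lambda> \<Longrightarrow> tl I \<in> seqs \<Lambda>"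
  by (cases I) (auto simp: seqs_def)

context
  fixes \<Lambda> \<Lambda>F :: nat
  assumes L1: "\<Lambda> \<ge> 1" and LF1: "\<Lambda>F \<ge> 1"
begin

lemma one_in: "(1::nat) \<in> {1..\<Lambda>}" "(1::nat) \<in> {1..\<Lambda>F}" using L1 LF1 by auto

lemma L_span: "l1 \<in> {1..\<Lambda>F} \<Longrightarrow> l2 \<in> {1..\<Lambda>F} \<Longrightarrow> I \<in> seqs \<Lambda> \<Longrightarrow> J \<in> seqs \<Lambda> \<Longrightarrow>
  opL \<Lambda> \<Lambda>F l1 l2 I J \<in> Op.span (B4 \<Lambda> \<Lambda>F)"
proof (induction "length J" arbitrary: I J rule: less_induct)
  case less
  show ?case
  proof (cases "last_both_one I J")
    case False then show ?thesis by (intro Op.span_base L_B4) (use less.prems in auto)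
  next
    case True
    define I' where "I' = butlast I"
    define J' where "J' = butlast J"
    have IJ: "I = I'@[1]" "J = J'@[1]" using True unfolding I'_def J'_def last_both_one_def
      by (auto intro: snoc_last)
    have sq: "I' \<in> seqs \<Lambda>" "J' \<in> seqs \<Lambda>" using less.prems IJ by auto
    have rel: "opL \<Lambda> \<Lambda>F l1 l2 I' J' = (\<Sum>mu\<in>{1..\<Lambda>F}. opF \<Lambda> \<Lambda>F l1 l2 I' J' mu mu) +
       (opL \<Lambda> \<Lambda>F l1 l2 (I'@[1]) (J'@[1]) + (\<Sum>k\<in>{1..\<Lambda>}-{1}. opL \<Lambda> \<Lambda>F l1 l2 (I'@[k]) (J'@[k])))"
      using rel_L[of \<Lambda> \<Lambda>F l1 l2 I' J'] sum_split1[OF one_in(1)] by simp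
    have e: "opL \<Lambda> \<Lambda>F l1 l2 I J = opL \<Lambda> \<Lambda>F l1 l2 I' J' - (\<Sum>mu\<in>{1..\<Lambda>F}. opF \<Lambda> \<Lambda>F l1 l2 I' J' mu mu)
        - (\<Sum>k\<in>{1..\<Lambda>}-{1}. opL \<Lambda> \<Lambda>F l1 l2 (I'@[k]) (J'@[k]))"
      unfolding IJ by (rule solve3[OF rel])
    show ?thesis unfolding e
    proof (intro Op.span_diff Op.span_sum)
      show "opL \<Lambda> \<Lambda>F l1 l2 I' J' \<in> Op.span (B4 \<Lambda> \<Lambda>F)"
        using less.hyps[of J' I'] less.prems sq IJ by simp
    next
      fix mu assume "mu \<in> {1..\<Lambda>F}"
      then show "opF \<Lambda> \<Lambda>F l1 l2 I' J' mu mu \<in> Op.span (B4 \<Lambda> \<Lambda>F)"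
        using less.prems sq by (intro Op.span_base F_B4) auto
    next
      fix k assume k: "k \<in> {1..\<Lambda>}-{1}"
      then show "opL \<Lambda> \<Lambda>F l1 l2 (I'@[k]) (J'@[k]) \<in> Op.span (B4 \<Lambda> \<Lambda>F)"
        using less.prems sq by (intro Op.span_base L_B4) (auto simp: last_both_one_def)
    qed
  qed
qed

abbreviation "G \<equiv> Op.span (B4 \<Lambda> \<Lambda>F)"

lemma S_special1: "I' \<in> seqs \<Lambda> \<Longrightarrow> opS \<Lambda> \<Lambda>F (1#I'@[1]) [1] \<in> G"
proof -
  assume sq: "I' \<in> seqs \<Lambda>"
  have rel: "opS \<Lambda> \<Lambda>F (I'@[1]) [] = (\<Sum>mu\<in>{1..\<Lambda>F}. opL \<Lambda> \<Lambda>F mu mu (I'@[1]) []) +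
     (opS \<Lambda> \<Lambda>F (1#I'@[1]) [1] + (\<Sum>k\<in>{1..\<Lambda>}-{1}. opS \<Lambda> \<Lambda>F (k#I'@[1]) [k]))"
    using rel_S1[of \<Lambda> \<Lambda>F "I'@[1]" "[]"] sum_split1[OF one_in(1)] by simp
  show ?thesis unfolding solve3[OF rel]
  proof (intro Op.span_diff Op.span_sum)
    show "opS \<Lambda> \<Lambda>F (I'@[1]) [] \<in> G" using sq one_in by (intro Op.span_base S_B4) (auto simp: Sc_def first_both_one_def last_both_one_def)
  next
    fix mu assume "mu \<in> {1..\<Lambda>F}"
    then show "opL \<Lambda> \<Lambda>F mu mu (I'@[1]) [] \<in> G" using sq one_in by (intro L_span) auto
  next
    fix k assume "k \<in> {1..\<Lambda>}-{1}"
    then show "opS \<Lambda> \<Lambda>F (k#I'@[1]) [k] \<in> G" using sq one_in by (intro Op.span_base S_B4) (auto simp: Sc_def first_both_one_def last_both_one_def)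
  qed
qed

lemma S_special2: "J' \<in> seqs \<Lambda> \<Longrightarrow> opS \<Lambda> \<Lambda>F [1] (1#J'@[1]) \<in> G"
proof -
  assume sq: "J' \<in> seqs \<Lambda>"
  have rel: "opS \<Lambda> \<Lambda>F [] (J'@[1]) = (\<Sum>mu\<in>{1..\<Lambda>F}. opL \<Lambda> \<Lambda>F mu mu [] (J'@[1])) +
     (opS \<Lambda> \<Lambda>F [1] (1#J'@[1]) + (\<Sum>k\<in>{1..\<Lambda>}-{1}. opS \<Lambda> \<Lambda>F [k] (k#J'@[1])))"
    using rel_S1[of \<Lambda> \<Lambda>F "[]" "J'@[1]"] sum_split1[OF one_in(1)] by simp
  show ?thesis unfolding solve3[OF rel]
  proof (intro Op.span_diff Op.span_sum)
    show "opS \<Lambda> \<Lambda>F [] (J'@[1]) \<in> G" using sq one_in by (intro Op.span_base S_B4) (auto simp: Sc_def first_both_one_def last_both_one_def)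
  next
    fix mu assume "mu \<in> {1..\<Lambda>F}"
    then show "opL \<Lambda> \<Lambda>F mu mu [] (J'@[1]) \<in> G" using sq one_in by (intro L_span) auto
  next
    fix k assume "k \<in> {1..\<Lambda>}-{1}"
    then show "opS \<Lambda> \<Lambda>F [k] (k#J'@[1]) \<in> G" using sq one_in by (intro Op.span_base S_B4) (auto simp: Sc_def first_both_one_def last_both_one_def)
  qed
qed

lemma R_span: "l1 \<in> {1..\<Lambda>F} \<Longrightarrow> l2 \<in> {1..\<Lambda>F} \<Longrightarrow> I \<in> seqs \<Lambda> \<Longrightarrow> J \<in> seqs \<Lambda> \<Longrightarrow>
  opR \<Lambda> \<Lambda>F I J l1 l2 \<in> G"
proof (induction "length I + length J" arbitrary: I J l1 l2 rule: less_induct)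
  case less
  note prems = less.prems
  show ?case
  proof (cases "Rc I J l1 l2")
    case True then show ?thesis by (intro Op.span_base R_B4) (use prems in auto)
  next
    case notR: False
    show ?thesis
    proof (cases "first_both_one I J")
      case True
      define I' where "I' = tl I"
      define J' where "J' = tl J"
      have IJ: "I = 1#I'" "J = 1#J'" using True unfolding I'_def J'_def first_both_one_def
        by (auto intro: cons_hd)
      have sq: "I' \<in> seqs \<Lambda>" "J' \<in> seqs \<Lambda>" using prems IJ by auto
      have rel: "opR \<Lambda> \<Lambda>F I' J' l1 l2 = (\<Sum>mu\<in>{1..\<Lambda>F}. opF \<Lambda> \<Lambda>F mu mu I' J' l1 l2) +
         (opR \<Lambda> \<Lambda>F (1#I') (1#J') l1 l2 + (\<Sum>k\<in>{1..\<Lambda>}-{1}. opR \<Lambda> \<Lambda>F (k#I') (k#J') l1 l2))"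
        using rel_R[of \<Lambda> \<Lambda>F I' J' l1 l2] sum_split1[OF one_in(1)] by simp
      show ?thesis unfolding IJ solve3[OF rel]
      proof (intro Op.span_diff Op.span_sum)
        show "opR \<Lambda> \<Lambda>F I' J' l1 l2 \<in> G" using less.hyps[of I' J' l1 l2] prems sq IJ by simp
      next
        fix mu assume "mu \<in> {1..\<Lambda>F}"
        then show "opF \<Lambda> \<Lambda>F mu mu I' J' l1 l2 \<in> G" using prems sq by (intro Op.span_base F_B4) auto
      next
        fix k assume "k \<in> {1..\<Lambda>}-{1}"
        then show "opR \<Lambda> \<Lambda>F (k#I') (k#J') l1 l2 \<in> G" using prems sq
          by (intro Op.span_base R_B4) (auto simp: Rc_def first_both_one_def)
      qed
    next
      case nf: False
      have cond: "(I = [] \<or> J = []) \<and> l1 = 1 \<and> l2 = 1 \<and> (I = [] \<or> hd I = 1) \<and> (J = [] \<or> hd J = 1)"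
        using notR nf unfolding Rc_def by auto
      consider "I = [] \<and> J = []" | "I \<noteq> [] \<and> J = []" | "I = [] \<and> J \<noteq> []" using cond by blast
      then show ?thesis
      proof cases
        case 1
        have rel: "(\<Sum>mu\<in>{1..\<Lambda>F}. opL \<Lambda> \<Lambda>F mu mu [] []) = opR \<Lambda> \<Lambda>F [] [] 1 1 + (\<Sum>mu\<in>{1..\<Lambda>F}-{1}. opR \<Lambda> \<Lambda>F [] [] mu mu)"
          using rel_Id[of \<Lambda> \<Lambda>F] sum_split1[OF one_in(2), of "\<lambda>mu. opR \<Lambda> \<Lambda>F [] [] mu mu"] by simp
        show ?thesis unfolding 1[THEN conjunct1] 1[THEN conjunct2] cond[THEN conjunct2, THEN conjunct1] cond[THEN conjunct2, THEN conjunct2, THEN conjunct1] solve2[OF rel]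
        proof (intro Op.span_diff Op.span_sum)
          fix mu assume "mu \<in> {1..\<Lambda>F}"
          then show "opL \<Lambda> \<Lambda>F mu mu [] [] \<in> G" by (intro L_span) auto
        next
          fix mu assume "mu \<in> {1..\<Lambda>F}-{1}"
          then show "opR \<Lambda> \<Lambda>F [] [] mu mu \<in> G" by (intro Op.span_base R_B4) (auto simp: Rc_def first_both_one_def)
        qed
      next
        case 2
        then have hI: "hd I = 1" using cond by auto
        define I'' where "I'' = tl I"
        have I1: "I = 1#I''" using 2 hI unfolding I''_def by (auto intro: cons_hd)
        have sq: "I'' \<in> seqs \<Lambda>" using prems I1 by auto
        have rel: "opS \<Lambda> \<Lambda>F I [] = (opR \<Lambda> \<Lambda>F I [] 1 1 + (\<Sum>mu\<in>{1..\<Lambda>F}-{1}. opR \<Lambda> \<Lambda>F I [] mu mu)) +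
             (\<Sum>k\<in>{1..\<Lambda>}. opS \<Lambda> \<Lambda>F (I@[k]) [k])"
          using rel_S2[of \<Lambda> \<Lambda>F I "[]"] sum_split1[OF one_in(2)] by simp
        have l12: "l1 = 1" "l2 = 1" using cond by auto
        show ?thesis unfolding 2[THEN conjunct2] l12 solve4[OF rel]
        proof (intro Op.span_diff Op.span_sum)
          show "opS \<Lambda> \<Lambda>F I [] \<in> G" using prems by (intro Op.span_base S_B4) (auto simp: Sc_def first_both_one_def last_both_one_def)
        next
          fix mu assume "mu \<in> {1..\<Lambda>F}-{1}"
          then show "opR \<Lambda> \<Lambda>F I [] mu mu \<in> G" using prems 2 by (intro Op.span_base R_B4) (auto simp: Rc_def first_both_one_def)
        next
          fix k assume k: "k \<in> {1..\<Lambda>}"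
          show "opS \<Lambda> \<Lambda>F (I@[k]) [k] \<in> G"
          proof (cases "k = 1")
            case True
            then show ?thesis using S_special1[OF sq] I1 by simp
          next
            case False
            then show ?thesis using prems k I1 by (intro Op.span_base S_B4) (auto simp: Sc_def first_both_one_def last_both_one_def)
          qed
        qed
      next
        case 3
        then have hJ: "hd J = 1" using cond by auto
        define J'' where "J'' = tl J"
        have J1: "J = 1#J''" using 3 hJ unfolding J''_def by (auto intro: cons_hd)
        have sq: "J'' \<in> seqs \<Lambda>" using prems J1 by auto
        have rel: "opS \<Lambda> \<Lambda>F [] J = (opR \<Lambda> \<Lambda>F [] J 1 1 + (\<Sum>mu\<in>{1..\<Lambda>F}-{1}. opR \<Lambda> \<Lambda>F [] J mu mu)) +
             (\<Sum>k\<in>{1..\<Lambda>}. opS \<Lambda> \<Lambda>F [k] (J@[k]))"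
          using rel_S2[of \<Lambda> \<Lambda>F "[]" J] sum_split1[OF one_in(2)] by simp
        have l12: "l1 = 1" "l2 = 1" using cond by auto
        show ?thesis unfolding 3[THEN conjunct1] l12 solve4[OF rel]
        proof (intro Op.span_diff Op.span_sum)
          show "opS \<Lambda> \<Lambda>F [] J \<in> G" using prems by (intro Op.span_base S_B4) (auto simp: Sc_def first_both_one_def last_both_one_def)
        next
          fix mu assume "mu \<in> {1..\<Lambda>F}-{1}"
          then show "opR \<Lambda> \<Lambda>F [] J mu mu \<in> G" using prems 3 by (intro Op.span_base R_B4) (auto simp: Rc_def first_both_one_def)
        next
          fix k assume k: "k \<in> {1..\<Lambda>}"
          show "opS \<Lambda> \<Lambda>F [k] (J@[k]) \<in> G"
          proof (cases "k = 1")
            case True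
            then show ?thesis using S_special2[OF sq] J1 by simp
          next
            case False
            then show ?thesis using prems k J1 by (intro Op.span_base S_B4) (auto simp: Sc_def first_both_one_def last_both_one_def)
          qed
        qed
      qed
    qed
  qed
qed

end



context
  fixes \<Lambda> \<Lambda>F :: nat
  assumes L1: "\<Lambda> \<ge> 1" and LF1: "\<Lambda>F \<ge> 1"
begin

lemma one_in': "(1::nat) \<in> {1..\<Lambda>}" "(1::nat) \<in> {1..\<Lambda>F}" using L1 LF1 by auto

lemma S_span: "I \<in> seqs \<Lambda> \<Longrightarrow> J \<in> seqs \<Lambda> \<Longrightarrow> opS \<Lambda> \<Lambda>F I J \<in> Op.span (B4 \<Lambda> \<Lambda>F)"
proof (induction "length I + length J" arbitrary: I J rule: less_induct)
  case less
  note prems = less.prems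
  show ?case
  proof (cases "Sc I J")
    case True then show ?thesis by (intro Op.span_base S_B4) (use prems in auto)
  next
    case notS: False
    show ?thesis
    proof (cases "first_both_one I J")
      case True
      define I' where "I' = tl I"
      define J' where "J' = tl J"
      have IJ: "I = 1#I'" "J = 1#J'" using True unfolding I'_def J'_def first_both_one_def
        by (auto intro: cons_hd)
      have sq: "I' \<in> seqs \<Lambda>" "J' \<in> seqs \<Lambda>" using prems IJ by auto
      have rel: "opS \<Lambda> \<Lambda>F I' J' = (\<Sum>mu\<in>{1..\<Lambda>F}. opL \<Lambda> \<Lambda>F mu mu I' J') +
         (opS \<Lambda> \<Lambda>F (1#I') (1#J') + (\<Sum>k\<in>{1..\<Lambda>}-{1}. opS \<Lambda> \<Lambda>F (k#I') (k#J')))"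
        using rel_S1[of \<Lambda> \<Lambda>F I' J'] sum_split1[OF one_in'(1), of "\<lambda>k. opS \<Lambda> \<Lambda>F (k#I') (k#J')"] by simp
      show ?thesis unfolding IJ solve3[OF rel]
      proof (intro Op.span_diff Op.span_sum)
        show "opS \<Lambda> \<Lambda>F I' J' \<in> Op.span (B4 \<Lambda> \<Lambda>F)" using less.hyps[of I' J'] sq IJ by simp
      next
        fix mu assume "mu \<in> {1..\<Lambda>F}"
        then show "opL \<Lambda> \<Lambda>F mu mu I' J' \<in> Op.span (B4 \<Lambda> \<Lambda>F)" using sq by (intro L_span L1 LF1) auto
      next
        fix k assume k: "k \<in> {1..\<Lambda>}-{1}"
        show "opS \<Lambda> \<Lambda>F (k#I') (k#J') \<in> Op.span (B4 \<Lambda> \<Lambda>F)"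
        proof (cases "last_both_one (k#I') (k#J')")
          case False
          then show ?thesis using k sq by (intro Op.span_base S_B4) (auto simp: Sc_def first_both_one_def)
        next
          case True
          define I'' where "I'' = butlast I'"
          define J'' where "J'' = butlast J'"
          have ne: "I' \<noteq> []" "J' \<noteq> []" using True k unfolding last_both_one_def by auto
          have IJ2: "I' = I''@[1]" "J' = J''@[1]" using True ne unfolding I''_def J''_def last_both_one_def
            by (auto intro: snoc_last)
          have sq2: "I'' \<in> seqs \<Lambda>" "J'' \<in> seqs \<Lambda>" using sq IJ2 by auto
          have rel2: "opS \<Lambda> \<Lambda>F (k#I'') (k#J'') = (\<Sum>mu\<in>{1..\<Lambda>F}. opR \<Lambda> \<Lambda>F (k#I'') (k#J'') mu mu) +
             (opS \<Lambda> \<Lambda>F (k#I''@[1]) (k#J''@[1]) + (\<Sum>m\<in>{1..\<Lambda>}-{1}. opS \<Lambda> \<Lambda>F (k#I''@[m]) (k#J''@[m])))"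
            using rel_S2[of \<Lambda> \<Lambda>F "k#I''" "k#J''"] sum_split1[OF one_in'(1), of "\<lambda>m. opS \<Lambda> \<Lambda>F (k#I''@[m]) (k#J''@[m])"] by simp
          show ?thesis unfolding IJ2 solve3[OF rel2]
          proof (intro Op.span_diff Op.span_sum)
            show "opS \<Lambda> \<Lambda>F (k#I'') (k#J'') \<in> Op.span (B4 \<Lambda> \<Lambda>F)"
              using less.hyps[of "k#I''" "k#J''"] sq2 IJ IJ2 k by simp
          next
            fix mu assume "mu \<in> {1..\<Lambda>F}"
            then show "opR \<Lambda> \<Lambda>F (k#I'') (k#J'') mu mu \<in> Op.span (B4 \<Lambda> \<Lambda>F)" using sq2 k by (intro R_span L1 LF1) auto
          next
            fix m assume "m \<in> {1..\<Lambda>}-{1}"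
            then show "opS \<Lambda> \<Lambda>F (k#I''@[m]) (k#J''@[m]) \<in> Op.span (B4 \<Lambda> \<Lambda>F)" using sq2 k
              by (intro Op.span_base S_B4) (auto simp: Sc_def first_both_one_def last_both_one_def)
          qed
        qed
      qed
    next
      case nf: False
      then have lb: "last_both_one I J" using notS unfolding Sc_def by auto
      define I' where "I' = butlast I"
      define J' where "J' = butlast J"
      have IJ: "I = I'@[1]" "J = J'@[1]" using lb unfolding I'_def J'_def last_both_one_def
        by (auto intro: snoc_last)
      have sq: "I' \<in> seqs \<Lambda>" "J' \<in> seqs \<Lambda>" using prems IJ by auto
      have rel: "opS \<Lambda> \<Lambda>F I' J' = (\<Sum>mu\<in>{1..\<Lambda>F}. opR \<Lambda> \<Lambda>F I' J' mu mu) +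
         (opS \<Lambda> \<Lambda>F (I'@[1]) (J'@[1]) + (\<Sum>m\<in>{1..\<Lambda>}-{1}. opS \<Lambda> \<Lambda>F (I'@[m]) (J'@[m])))"
        using rel_S2[of \<Lambda> \<Lambda>F I' J'] sum_split1[OF one_in'(1), of "\<lambda>m. opS \<Lambda> \<Lambda>F (I'@[m]) (J'@[m])"] by simp
      show ?thesis unfolding IJ solve3[OF rel]
      proof (intro Op.span_diff Op.span_sum)
        show "opS \<Lambda> \<Lambda>F I' J' \<in> Op.span (B4 \<Lambda> \<Lambda>F)" using less.hyps[of I' J'] sq IJ by simp
      next
        fix mu assume "mu \<in> {1..\<Lambda>F}"
        then show "opR \<Lambda> \<Lambda>F I' J' mu mu \<in> Op.span (B4 \<Lambda> \<Lambda>F)" using sq by (intro R_span L1 LF1) auto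
      next
        fix m assume m: "m \<in> {1..\<Lambda>}-{1}"
        have "\<not> first_both_one (I'@[m]) (J'@[m])"
          using nf m IJ by (cases I'; cases J') (auto simp: first_both_one_def)
        then show "opS \<Lambda> \<Lambda>F (I'@[m]) (J'@[m]) \<in> Op.span (B4 \<Lambda> \<Lambda>F)" using sq m
          by (intro Op.span_base S_B4) (auto simp: Sc_def last_both_one_def)
      qed
    qed
  qed
qed

lemma B4_sub_all: "B4 \<Lambda> \<Lambda>F \<subseteq> all_ops \<Lambda> \<Lambda>F"
  unfolding B4_def all_ops_def
  apply (intro Un_least)
  apply (rule subsetI, rule UnI1, rule UnI1, rule UnI1, blast)
  apply (rule subsetI, rule UnI1, rule UnI1, rule UnI2, blast)
  apply (rule subsetI, rule UnI1, rule UnI2, blast intro: seqs_Nil)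
  apply (rule subsetI, rule UnI1, rule UnI2, blast intro: seqs_Nil)
  apply (rule subsetI, rule UnI1, rule UnI2, blast intro: seqs_Nil)
  apply (rule subsetI, rule UnI1, rule UnI2, blast intro: seqs_Nil)
  apply (rule subsetI, rule UnI2, blast intro: seqs_Nil)
  apply (rule subsetI, rule UnI2, blast intro: seqs_Nil)
  apply (rule subsetI, rule UnI2, blast intro: seqs_Nil)
  apply (rule subsetI, rule UnI2, blast intro: seqs_Nil)
  done

lemma all_sub_span: "all_ops \<Lambda> \<Lambda>F \<subseteq> Op.span (B4 \<Lambda> \<Lambda>F)"
  unfolding all_ops_def
  apply (intro Un_least subsetI)
  apply (auto intro!: Op.span_base F_B4)[1]
  apply (auto intro: L_span L1 LF1)[1]
  apply (auto intro: R_span L1 LF1)[1]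
  apply (auto intro: S_span)[1]
  done

lemma span_B4: "Op.span (B4 \<Lambda> \<Lambda>F) = Ghat \<Lambda> \<Lambda>F"
  unfolding Ghat_def Op.span_eq using B4_sub_all all_sub_span Op.span_superset by blast

end



abbreviation rep :: "nat \<Rightarrow> nat list" where "rep n \<equiv> replicate n (1::nat)"

definition lsuf :: "nat list \<Rightarrow> nat list \<Rightarrow> nat list \<Rightarrow> nat list \<Rightarrow> bool" where
  "lsuf I0 J0 I J \<longleftrightarrow> (\<exists>W. I = W @ I0 \<and> J = W @ J0)"

definition rpre :: "nat list \<Rightarrow> nat list \<Rightarrow> nat list \<Rightarrow> nat list \<Rightarrow> bool" where
  "rpre I0 J0 I J \<longleftrightarrow> (\<exists>W. I = I0 @ W \<and> J = J0 @ W)"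

lemma Qf_pad: "Qf I0 J0 (rep n @ J) (rep n @ I) \<longleftrightarrow>
   lsuf I0 J0 I J \<or> (\<exists>t. 1 \<le> t \<and> t \<le> n \<and> J0 = rep t @ J \<and> I0 = rep t @ I)"
proof
  assume "Qf I0 J0 (rep n @ J) (rep n @ I)"
  then obtain X where X: "rep n @ J = X @ J0" "rep n @ I = X @ I0" by (auto simp: Qf_def)
  show "lsuf I0 J0 I J \<or> (\<exists>t. 1 \<le> t \<and> t \<le> n \<and> J0 = rep t @ J \<and> I0 = rep t @ I)"
  proof (cases "n \<le> length X")
    case True
    have "J = drop n X @ J0" using arg_cong[OF X(1), of "drop n"] True by simp
    moreover have "I = drop n X @ I0" using arg_cong[OF X(2), of "drop n"] True by simp
    ultimately show ?thesis unfolding lsuf_def by blast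
  next
    case False
    have "J0 = rep (n - length X) @ J" using arg_cong[OF X(1), of "drop (length X)"] False by simp
    moreover have "I0 = rep (n - length X) @ I" using arg_cong[OF X(2), of "drop (length X)"] False by simp
    ultimately show ?thesis using False by (intro disjI2 exI[of _ "n - length X"]) auto
  qed
next
  assume "lsuf I0 J0 I J \<or> (\<exists>t. 1 \<le> t \<and> t \<le> n \<and> J0 = rep t @ J \<and> I0 = rep t @ I)"
  then show "Qf I0 J0 (rep n @ J) (rep n @ I)"
  proof
    assume "lsuf I0 J0 I J"
    then obtain W where "I = W @ I0" "J = W @ J0" by (auto simp: lsuf_def)
    then show ?thesis unfolding Qf_def by (intro exI[of _ "rep n @ W"]) simp
  next
    assume "\<exists>t. 1 \<le> t \<and> t \<le> n \<and> J0 = rep t @ J \<and> I0 = rep t @ I"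
    then obtain t where t: "t \<le> n" "J0 = rep t @ J" "I0 = rep t @ I" by auto
    have "rep n = rep (n - t) @ rep t" using t(1) by (simp add: replicate_add[symmetric])
    then show ?thesis unfolding Qf_def using t by (intro exI[of _ "rep (n - t)"]) simp
  qed
qed

lemma lsuf_rev: "lsuf (rev I0) (rev J0) (rev I) (rev J) \<longleftrightarrow> rpre I0 J0 I J"
proof
  assume "lsuf (rev I0) (rev J0) (rev I) (rev J)"
  then obtain W where "rev I = W @ rev I0" "rev J = W @ rev J0" by (auto simp: lsuf_def)
  then have "I = I0 @ rev W" "J = J0 @ rev W" by (metis rev_append rev_rev_ident)+
  then show "rpre I0 J0 I J" by (auto simp: rpre_def)
next
  assume "rpre I0 J0 I J"
  then obtain W where "I = I0 @ W" "J = J0 @ W" by (auto simp: rpre_def)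
  then show "lsuf (rev I0) (rev J0) (rev I) (rev J)" by (auto simp: lsuf_def)
qed

lemma Pf_pad: "Pf I0 J0 (J @ rep n) (I @ rep n) \<longleftrightarrow>
   rpre I0 J0 I J \<or> (\<exists>t. 1 \<le> t \<and> t \<le> n \<and> J0 = J @ rep t \<and> I0 = I @ rep t)"
proof -
  have "Pf I0 J0 (J @ rep n) (I @ rep n) \<longleftrightarrow> Qf (rev I0) (rev J0) (rep n @ rev J) (rep n @ rev I)"
    using Qf_rev[of I0 J0 "J @ rep n" "I @ rep n"] by simp
  also have "\<dots> \<longleftrightarrow> lsuf (rev I0) (rev J0) (rev I) (rev J) \<or> (\<exists>t. 1 \<le> t \<and> t \<le> n \<and> rev J0 = rep t @ rev J \<and> rev I0 = rep t @ rev I)"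
    by (rule Qf_pad)
  also have "\<dots> \<longleftrightarrow> rpre I0 J0 I J \<or> (\<exists>t. 1 \<le> t \<and> t \<le> n \<and> J0 = J @ rep t \<and> I0 = I @ rep t)"
  proof -
    have "\<And>t. rev J0 = rep t @ rev J \<longleftrightarrow> J0 = J @ rep t"
      by (metis rev_append rev_replicate rev_rev_ident)
    moreover have "\<And>t. rev I0 = rep t @ rev I \<longleftrightarrow> I0 = I @ rep t"
      by (metis rev_append rev_replicate rev_rev_ident)
    ultimately show ?thesis by (simp add: lsuf_rev)
  qed
  finally show ?thesis .
qed

lemma lsuf_step: "lsuf I0 J0 I J \<longleftrightarrow> (I0 = I \<and> J0 = J) \<or>
   (I \<noteq> [] \<and> J \<noteq> [] \<and> hd I = hd J \<and> lsuf I0 J0 (tl I) (tl J))"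
proof
  assume "lsuf I0 J0 I J"
  then obtain W where W: "I = W @ I0" "J = W @ J0" by (auto simp: lsuf_def)
  show "(I0 = I \<and> J0 = J) \<or> (I \<noteq> [] \<and> J \<noteq> [] \<and> hd I = hd J \<and> lsuf I0 J0 (tl I) (tl J))"
  proof (cases W)
    case Nil then show ?thesis using W by simp
  next
    case (Cons w W')
    then show ?thesis using W by (auto simp: lsuf_def)
  qed
next
  assume "(I0 = I \<and> J0 = J) \<or> (I \<noteq> [] \<and> J \<noteq> [] \<and> hd I = hd J \<and> lsuf I0 J0 (tl I) (tl J))"
  then show "lsuf I0 J0 I J"
  proof
    assume "I0 = I \<and> J0 = J" then show ?thesis by (auto simp: lsuf_def intro: exI[of _ "[]"])
  next
    assume a: "I \<noteq> [] \<and> J \<noteq> [] \<and> hd I = hd J \<and> lsuf I0 J0 (tl I) (tl J)"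
    then obtain W where W: "tl I = W @ I0" "tl J = W @ J0" by (auto simp: lsuf_def)
    have "I = (hd I # W) @ I0" "J = (hd I # W) @ J0" using a W by (metis append_Cons list.collapse)+
    then show ?thesis unfolding lsuf_def by blast
  qed
qed

lemma lsuf_len: "lsuf I0 J0 I J \<Longrightarrow> length I0 \<le> length I"
  by (auto simp: lsuf_def)

lemma lsuf_mob: "(if lsuf I0 J0 I J then 1 else 0) -
   (if I \<noteq> [] \<and> J \<noteq> [] \<and> hd I = hd J then (if lsuf I0 J0 (tl I) (tl J) then 1 else 0) else 0)
   = (if I0 = I \<and> J0 = J then (1::complex) else 0)"
proof -
  have ex: "I \<noteq> [] \<Longrightarrow> lsuf I0 J0 (tl I) (tl J) \<Longrightarrow> I0 \<noteq> I"
    using lsuf_len[of I0 J0 "tl I" "tl J"] by (cases I) auto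
  show ?thesis using lsuf_step[of I0 J0 I J] ex by auto
qed

lemma rpre_step: "rpre I0 J0 I J \<longleftrightarrow> (I0 = I \<and> J0 = J) \<or>
   (I \<noteq> [] \<and> J \<noteq> [] \<and> last I = last J \<and> rpre I0 J0 (butlast I) (butlast J))"
proof -
  have "rpre I0 J0 I J \<longleftrightarrow> lsuf (rev I0) (rev J0) (rev I) (rev J)" by (simp add: lsuf_rev)
  also have "\<dots> \<longleftrightarrow> (rev I0 = rev I \<and> rev J0 = rev J) \<or>
     (rev I \<noteq> [] \<and> rev J \<noteq> [] \<and> hd (rev I) = hd (rev J) \<and> lsuf (rev I0) (rev J0) (tl (rev I)) (tl (rev J)))"
    by (rule lsuf_step)
  also have "\<dots> \<longleftrightarrow> (I0 = I \<and> J0 = J) \<or>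
   (I \<noteq> [] \<and> J \<noteq> [] \<and> last I = last J \<and> rpre I0 J0 (butlast I) (butlast J))"
    by (simp add: tl_rev hd_rev lsuf_rev)
  finally show ?thesis .
qed

lemma rpre_len: "rpre I0 J0 I J \<Longrightarrow> length I0 \<le> length I"
  by (auto simp: rpre_def)

lemma rpre_mob: "(if rpre I0 J0 I J then 1 else 0) -
   (if I \<noteq> [] \<and> J \<noteq> [] \<and> last I = last J then (if rpre I0 J0 (butlast I) (butlast J) then 1 else 0) else 0)
   = (if I0 = I \<and> J0 = J then (1::complex) else 0)"
proof -
  have ex: "I \<noteq> [] \<Longrightarrow> rpre I0 J0 (butlast I) (butlast J) \<Longrightarrow> I0 \<noteq> I"
    using rpre_len[of I0 J0 "butlast I" "butlast J"] by (cases I rule: rev_cases) auto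
  show ?thesis using rpre_step[of I0 J0 I J] ex by auto
qed



definition T2 :: "nat \<Rightarrow> nat list \<Rightarrow> nat list \<Rightarrow> oper \<Rightarrow> complex" where
  "T2 n I J A = A (1, rep n @ J, 1) (1, rep n @ I, 1) -
     (if last (rep n @ J) = last (rep n @ I) then A (1, butlast (rep n @ J), 1) (1, butlast (rep n @ I), 1) else 0)"

definition Phi2 :: "nat \<Rightarrow> nat list \<Rightarrow> nat list \<Rightarrow> oper \<Rightarrow> complex" where
  "Phi2 n I J A = T2 n I J A - (if I \<noteq> [] \<and> J \<noteq> [] \<and> hd I = hd J then T2 n (tl I) (tl J) A else 0)"

definition Psi2 :: "nat \<Rightarrow> nat \<Rightarrow> nat list \<Rightarrow> nat list \<Rightarrow> oper \<Rightarrow> complex" where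
  "Psi2 n M I J A = (\<Sum>m\<in>{1..M}. Phi2 n (I @ rep m) (J @ rep m) A)"

definition Th3 :: "nat \<Rightarrow> nat \<Rightarrow> nat \<Rightarrow> nat list \<Rightarrow> nat list \<Rightarrow> oper \<Rightarrow> complex" where
  "Th3 n a c I J A = A (a, J @ rep n, 1) (c, I @ rep n, 1) -
     (if I \<noteq> [] \<and> J \<noteq> [] \<and> last I = last J then A (a, butlast J @ rep n, 1) (c, butlast I @ rep n, 1) else 0)"

definition Th4 :: "nat \<Rightarrow> nat \<Rightarrow> nat \<Rightarrow> nat list \<Rightarrow> nat list \<Rightarrow> oper \<Rightarrow> complex" where
  "Th4 n b d I J A = A (1, rep n @ J, b) (1, rep n @ I, d) -
     (if I \<noteq> [] \<and> J \<noteq> [] \<and> hd I = hd J then A (1, rep n @ tl J, b) (1, rep n @ tl I, d) else 0)"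

lemma Pf_butlast: "length J0 < length K \<Longrightarrow>
  Pf I0 J0 K M \<longleftrightarrow> (K \<noteq> [] \<and> M \<noteq> [] \<and> last K = last M \<and> Pf I0 J0 (butlast K) (butlast M))"
proof
  assume l: "length J0 < length K" and "Pf I0 J0 K M"
  then obtain X where X: "K = J0 @ X" "M = I0 @ X" by (auto simp: Pf_def)
  with l have "X \<noteq> []" by auto
  then show "K \<noteq> [] \<and> M \<noteq> [] \<and> last K = last M \<and> Pf I0 J0 (butlast K) (butlast M)"
    using X by (auto simp: Pf_def butlast_append)
next
  assume "K \<noteq> [] \<and> M \<noteq> [] \<and> last K = last M \<and> Pf I0 J0 (butlast K) (butlast M)"
  then obtain X where X: "butlast K = J0 @ X" "butlast M = I0 @ X" "K \<noteq> []" "M \<noteq> []" "last K = last M"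
    by (auto simp: Pf_def)
  have "K = J0 @ (X @ [last K])" using X by (metis append_assoc append_butlast_last_id)
  moreover have "M = I0 @ (X @ [last K])" using X by (metis append_assoc append_butlast_last_id)
  ultimately show "Pf I0 J0 K M" by (auto simp: Pf_def)
qed

lemma Qf_butlast: "K \<noteq> [] \<Longrightarrow> M \<noteq> [] \<Longrightarrow>
  (last K = last M \<and> Qf I0 J0 (butlast K) (butlast M)) \<longleftrightarrow> Qf (I0@[last K]) (J0@[last K]) K M"
proof
  assume ne: "K \<noteq> []" "M \<noteq> []" and a: "last K = last M \<and> Qf I0 J0 (butlast K) (butlast M)"
  then obtain X where X: "butlast K = X @ J0" "butlast M = X @ I0" by (auto simp: Qf_def)
  have "K = X @ (J0 @ [last K])" using X ne by (metis append_assoc append_butlast_last_id)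
  moreover have "M = X @ (I0 @ [last K])" using X ne a by (metis append_assoc append_butlast_last_id)
  ultimately show "Qf (I0@[last K]) (J0@[last K]) K M" by (auto simp: Qf_def)
next
  assume ne: "K \<noteq> []" "M \<noteq> []" and "Qf (I0@[last K]) (J0@[last K]) K M"
  then obtain X where X: "K = X @ J0 @ [last K]" "M = X @ I0 @ [last K]" by (auto simp: Qf_def)
  then show "last K = last M \<and> Qf I0 J0 (butlast K) (butlast M)"
    by (metis Qf_def append_assoc butlast_snoc last_snoc)
qed

lemma rep_seqs: "1 \<le> \<Lambda> \<Longrightarrow> rep n \<in> seqs \<Lambda>"
  by (auto simp: seqs_def)

lemma valid1: "1 \<le> \<Lambda>F \<Longrightarrow> K \<in> seqs \<Lambda> \<Longrightarrow> a \<in> {1..\<Lambda>F} \<Longrightarrow> b \<in> {1..\<Lambda>F} \<Longrightarrow> valid \<Lambda> \<Lambda>F (a, K, b)"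
  by (simp add: valid_def)

lemma ind_of_nat: "(of_nat (if P then 1 else 0) :: complex) = (if P then 1 else 0)"
  by simp

context
  fixes \<Lambda> \<Lambda>F :: nat
  assumes L1: "\<Lambda> \<ge> 1" and LF1: "\<Lambda>F \<ge> 1"
begin

lemma oneF: "(1::nat) \<in> {1..\<Lambda>F}" using LF1 by auto

lemma v1: "K \<in> seqs \<Lambda> \<Longrightarrow> valid \<Lambda> \<Lambda>F (1, K, 1)"
  using LF1 by (simp add: valid_def)

lemma rep_seqs': "rep n \<in> seqs \<Lambda>"
  using L1 by (auto simp: seqs_def)

lemma vpad1: "J \<in> seqs \<Lambda> \<Longrightarrow> valid \<Lambda> \<Lambda>F (1, rep n @ J, 1)"
  by (rule v1) (use rep_seqs' in simp)

lemma vpad2: "J \<in> seqs \<Lambda> \<Longrightarrow> valid \<Lambda> \<Lambda>F (1, butlast (rep n @ J), 1)"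
  by (rule v1, rule seqs_butlast) (use rep_seqs' in simp)

lemmas vpad = vpad1 vpad2

lemma T2_F: "length J0 + 1 < n \<Longrightarrow> T2 n I J (opF \<Lambda> \<Lambda>F l1 l2 I0 J0 l3 l4) = 0"
proof -
  assume l: "length J0 + 1 < n"
  have a: "rep n @ J \<noteq> J0" using l by (auto dest: arg_cong[of _ _ length])
  have b: "butlast (rep n @ J) \<noteq> J0" using l by (auto dest: arg_cong[of _ _ length])
  show ?thesis unfolding T2_def opF_app using a b by simp
qed

lemma T2_L: "J \<in> seqs \<Lambda> \<Longrightarrow> length J0 < n \<Longrightarrow> T2 n I J (opL \<Lambda> \<Lambda>F l1 l2 I0 J0) = 0"
proof -
  assume sJ: "J \<in> seqs \<Lambda>" and l: "length J0 < n"
  have ne: "rep n @ J \<noteq> []" "rep n @ I \<noteq> []" using l by auto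
  have "Pf I0 J0 (rep n @ J) (rep n @ I) \<longleftrightarrow> (last (rep n @ J) = last (rep n @ I) \<and> Pf I0 J0 (butlast (rep n @ J)) (butlast (rep n @ I)))"
    using Pf_butlast[of J0 "rep n @ J" I0 "rep n @ I"] l ne by simp
  then show ?thesis unfolding T2_def opL_app using vpad[OF sJ] by auto
qed

lemma ext_Sc: "Sc I0 J0 \<Longrightarrow> 1 \<le> t \<Longrightarrow> \<not> (J0 = rep t @ J \<and> I0 = rep t @ I)"
  by (cases t) (auto simp: Sc_def first_both_one_def)

lemma T2_S: "J \<in> seqs \<Lambda> \<Longrightarrow> 1 \<le> n \<Longrightarrow> Sc I0 J0 \<Longrightarrow>
  T2 n I J (opS \<Lambda> \<Lambda>F I0 J0) = (if lsuf I0 J0 I J then 1 else 0)"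
proof -
  assume sJ: "J \<in> seqs \<Lambda>" and n: "1 \<le> n" and sc: "Sc I0 J0"
  let ?K = "rep n @ J" and ?M = "rep n @ I"
  have ne: "?K \<noteq> []" "?M \<noteq> []" using n by auto
  have c: "cnt I0 J0 ?K ?M = (if Qf I0 J0 ?K ?M then 1 else 0) +
     (if last ?K = last ?M then cnt I0 J0 (butlast ?K) (butlast ?M) else 0)"
    using cnt_right[of I0 J0 ?K ?M] ne by simp
  have q: "Qf I0 J0 ?K ?M \<longleftrightarrow> lsuf I0 J0 I J"
    using Qf_pad[of I0 J0 n J I] ext_Sc[OF sc] by blast
  show ?thesis unfolding T2_def opS_app using vpad[OF sJ] c q by auto
qed

lemma ext_Rc: "Rc I0 J0 1 1 \<Longrightarrow> 1 \<le> t \<Longrightarrow> \<not> (J0 @ [k] = rep t @ J \<and> I0 @ [k] = rep t @ I)"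
proof
  assume rc: "Rc I0 J0 1 1" and t: "1 \<le> t" and e: "J0 @ [k] = rep t @ J \<and> I0 @ [k] = rep t @ I"
  obtain t' where t': "t = Suc t'" using t by (cases t) auto
  have hJ: "hd (J0 @ [k]) = 1" "hd (I0 @ [k]) = 1" using e t' by auto
  show False
  proof (cases "I0 = []")
    case True
    then have "[k] = rep t @ I" using e by simp
    then have k1: "k = 1" using t' by (cases t') auto
    show False
    proof (cases "J0 = []")
      case True then show False using rc \<open>I0 = []\<close> by (simp add: Rc_def)
    next
      case False then show False using rc \<open>I0 = []\<close> hJ by (simp add: Rc_def)
    qed
  next
    case False
    show False
    proof (cases "J0 = []")
      case True
      then have "[k] = rep t @ J" using e by simp
      then have k1: "k = 1" using t' by (cases t') auto
      then show False using rc \<open>J0 = []\<close> \<open>I0 \<noteq> []\<close> hJ by (simp add: Rc_def)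
    next
      case False
      then show False using rc \<open>I0 \<noteq> []\<close> hJ by (simp add: Rc_def first_both_one_def)
    qed
  qed
qed

lemma T2_R: "J \<in> seqs \<Lambda> \<Longrightarrow> 1 \<le> n \<Longrightarrow> Rc I0 J0 l1 l2 \<Longrightarrow>
  T2 n I J (opR \<Lambda> \<Lambda>F I0 J0 l1 l2) = (if l1 = 1 \<and> l2 = 1 then
    (if lsuf I0 J0 I J then 1 else 0) - (if \<exists>k. lsuf (I0@[k]) (J0@[k]) I J then 1 else 0) else 0)"
proof (cases "l1 = 1 \<and> l2 = 1")
  case False
  then show ?thesis unfolding T2_def opR_app by auto
next
  case True
  assume sJ: "J \<in> seqs \<Lambda>" and n: "1 \<le> n" and rc0: "Rc I0 J0 l1 l2"
  have rc: "Rc I0 J0 1 1" using rc0 True by simp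
  let ?K = "rep n @ J" and ?M = "rep n @ I"
  have ne: "?K \<noteq> []" "?M \<noteq> []" using n by auto
  have q: "Qf I0 J0 ?K ?M \<longleftrightarrow> lsuf I0 J0 I J"
    using Qf_pad[of I0 J0 n J I] rc by (auto simp: Rc_def first_both_one_def Suc_le_eq)
  have q2: "(last ?K = last ?M \<and> Qf I0 J0 (butlast ?K) (butlast ?M)) \<longleftrightarrow> (\<exists>k. lsuf (I0@[k]) (J0@[k]) I J)"
  proof -
    have "(last ?K = last ?M \<and> Qf I0 J0 (butlast ?K) (butlast ?M)) \<longleftrightarrow> Qf (I0@[last ?K]) (J0@[last ?K]) ?K ?M"
      by (rule Qf_butlast[OF ne])
    also have "\<dots> \<longleftrightarrow> lsuf (I0@[last ?K]) (J0@[last ?K]) I J"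
      using Qf_pad[of "I0@[last ?K]" "J0@[last ?K]" n J I] ext_Rc[OF rc] by blast
    also have "\<dots> \<longleftrightarrow> (\<exists>k. lsuf (I0@[k]) (J0@[k]) I J)"
    proof
      assume "\<exists>k. lsuf (I0@[k]) (J0@[k]) I J"
      then obtain k W where "I = W @ I0 @ [k]" "J = W @ J0 @ [k]" by (auto simp: lsuf_def)
      then show "lsuf (I0@[last ?K]) (J0@[last ?K]) I J" by (auto simp: lsuf_def)
    qed blast
    finally show ?thesis .
  qed
  show ?thesis unfolding T2_def opR_app using vpad[OF sJ] True q q2 by auto
qed

lemma Phi2_F: "length J0 + 2 < n \<Longrightarrow> Phi2 n I J (opF \<Lambda> \<Lambda>F l1 l2 I0 J0 l3 l4) = 0"
  unfolding Phi2_def using T2_F by simp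

lemma Phi2_L: "J \<in> seqs \<Lambda> \<Longrightarrow> length J0 < n \<Longrightarrow> Phi2 n I J (opL \<Lambda> \<Lambda>F l1 l2 I0 J0) = 0"
  unfolding Phi2_def using T2_L seqs_tl by simp

lemma Phi2_S: "J \<in> seqs \<Lambda> \<Longrightarrow> 1 \<le> n \<Longrightarrow> Sc I0 J0 \<Longrightarrow>
  Phi2 n I J (opS \<Lambda> \<Lambda>F I0 J0) = (if I0 = I \<and> J0 = J then 1 else 0)"
proof -
  assume a: "J \<in> seqs \<Lambda>" "1 \<le> n" "Sc I0 J0"
  have a2: "tl J \<in> seqs \<Lambda>" using a(1) by (rule seqs_tl)
  show ?thesis unfolding Phi2_def T2_S[OF a] T2_S[OF a2 a(2,3)] using lsuf_mob[of I0 J0 I J] by simp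
qed

lemma ex_lsuf_mob: "(if \<exists>k. lsuf (I0@[k]) (J0@[k]) I J then 1 else 0) -
   (if I \<noteq> [] \<and> J \<noteq> [] \<and> hd I = hd J then (if \<exists>k. lsuf (I0@[k]) (J0@[k]) (tl I) (tl J) then 1 else 0) else 0)
   = (if \<exists>k. I0@[k] = I \<and> J0@[k] = J then (1::complex) else 0)"
proof -
  have st: "(\<exists>k. lsuf (I0@[k]) (J0@[k]) I J) \<longleftrightarrow> (\<exists>k. I0@[k] = I \<and> J0@[k] = J) \<or>
     (I \<noteq> [] \<and> J \<noteq> [] \<and> hd I = hd J \<and> (\<exists>k. lsuf (I0@[k]) (J0@[k]) (tl I) (tl J)))"
    using lsuf_step[of "I0@[_]" "J0@[_]" I J] by blast
  have ex: "I0@[k] \<noteq> I" if h: "lsuf (I0@[k']) (J0@[k']) (tl I) (tl J)" for k k'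
  proof
    assume e: "I0@[k] = I"
    have "length (I0@[k']) \<le> length (tl I)" using lsuf_len[OF h] .
    then show False using e by auto
  qed
  show ?thesis using st ex by auto
qed

lemma Phi2_R: "J \<in> seqs \<Lambda> \<Longrightarrow> 1 \<le> n \<Longrightarrow> Rc I0 J0 l1 l2 \<Longrightarrow>
  Phi2 n I J (opR \<Lambda> \<Lambda>F I0 J0 l1 l2) = (if l1 = 1 \<and> l2 = 1 then
    (if I0 = I \<and> J0 = J then 1 else 0) - (if \<exists>k. I0@[k] = I \<and> J0@[k] = J then 1 else 0) else 0)"
proof -
  assume a: "J \<in> seqs \<Lambda>" "1 \<le> n" "Rc I0 J0 l1 l2"
  have a2: "tl J \<in> seqs \<Lambda>" using a(1) by (rule seqs_tl)
  show ?thesis unfolding Phi2_def T2_R[OF a] T2_R[OF a2 a(2,3)]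
    using lsuf_mob[of I0 J0 I J] ex_lsuf_mob[of I0 J0 I J] by (auto simp: algebra_simps)
qed

end



lemma telescope: "(\<Sum>m\<in>{1..(M::nat)}. (f m - f (m - 1))::complex) = f M - f 0"
proof (induction M)
  case 0 then show ?case by simp
next
  case (Suc M)
  have "{1..Suc M} = insert (Suc M) {1..M}" by auto
  then show ?case using Suc by simp
qed

lemma rep_Suc_snoc: "rep (Suc m) = rep m @ [1]"
  by (simp add: replicate_append_same)

context
  fixes \<Lambda> \<Lambda>F :: nat
  assumes L1: "\<Lambda> \<ge> 1" and LF1: "\<Lambda>F \<ge> 1"
begin

lemma rep_seqs2: "rep n \<in> seqs \<Lambda>"
  using L1 by (auto simp: seqs_def)

lemma Psi2_R: "J \<in> seqs \<Lambda> \<Longrightarrow> 1 \<le> n \<Longrightarrow> Rc I0 J0 l1 l2 \<Longrightarrow>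
  Psi2 n M I J (opR \<Lambda> \<Lambda>F I0 J0 l1 l2) = (if l1 = 1 \<and> l2 = 1 then
    (if I0 = I @ rep M \<and> J0 = J @ rep M then 1 else 0) - (if I0 = I \<and> J0 = J then 1 else 0) else 0)"
proof -
  assume a: "J \<in> seqs \<Lambda>" "1 \<le> n" "Rc I0 J0 l1 l2"
  let ?f = "\<lambda>m. (if I0 = I @ rep m \<and> J0 = J @ rep m then 1 else 0)::complex"
  have sq: "\<And>m. J @ rep m \<in> seqs \<Lambda>" using a(1) rep_seqs2 by simp
  have step: "Phi2 n (I @ rep m) (J @ rep m) (opR \<Lambda> \<Lambda>F I0 J0 l1 l2) =
      (if l1 = 1 \<and> l2 = 1 then ?f m - ?f (m - 1) else 0)" if m: "m \<in> {1..M}" for m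
  proof -
    obtain m' where m': "m = Suc m'" using m by (cases m) auto
    have "(\<exists>k. I0@[k] = I @ rep m \<and> J0@[k] = J @ rep m) \<longleftrightarrow> (I0 = I @ rep (m - 1) \<and> J0 = J @ rep (m - 1))"
      unfolding m' rep_Suc_snoc by auto
    then show ?thesis using Phi2_R[OF L1 LF1 sq a(2,3), of "I @ rep m"] by simp
  qed
  have "Psi2 n M I J (opR \<Lambda> \<Lambda>F I0 J0 l1 l2) = (\<Sum>m\<in>{1..M}. (if l1 = 1 \<and> l2 = 1 then ?f m - ?f (m - 1) else 0))"
    unfolding Psi2_def by (rule sum.cong[OF refl step])
  also have "\<dots> = (if l1 = 1 \<and> l2 = 1 then ?f M - ?f 0 else 0)"
  proof (cases "l1 = 1 \<and> l2 = 1")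
    case True then show ?thesis using telescope[of ?f M] by simp
  next
    case False then show ?thesis by (simp only: False if_False sum.neutral_const)
  qed
  finally show ?thesis by simp
qed

lemma Psi2_S: "J \<in> seqs \<Lambda> \<Longrightarrow> 1 \<le> n \<Longrightarrow> Sc I0 J0 \<Longrightarrow> Psi2 n M I J (opS \<Lambda> \<Lambda>F I0 J0) = 0"
proof -
  assume a: "J \<in> seqs \<Lambda>" "1 \<le> n" "Sc I0 J0"
  have sq: "\<And>m. J @ rep m \<in> seqs \<Lambda>" using a(1) rep_seqs2 by simp
  have "Phi2 n (I @ rep m) (J @ rep m) (opS \<Lambda> \<Lambda>F I0 J0) = 0" if m: "m \<in> {1..M}" for m
  proof -
    obtain m' where m': "m = Suc m'" using m by (cases m) auto
    have "\<not> (I0 = I @ rep m \<and> J0 = J @ rep m)"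
      using a(3) unfolding m' rep_Suc_snoc Sc_def last_both_one_def by auto
    then show ?thesis using Phi2_S[OF L1 LF1 sq a(2,3), of "I @ rep m"] by simp
  qed
  then show ?thesis unfolding Psi2_def by simp
qed

lemma Psi2_F: "length J0 + 2 < n \<Longrightarrow> Psi2 n M I J (opF \<Lambda> \<Lambda>F l1 l2 I0 J0 l3 l4) = 0"
  unfolding Psi2_def using Phi2_F[OF L1 LF1] by simp

lemma Psi2_L: "J \<in> seqs \<Lambda> \<Longrightarrow> length J0 < n \<Longrightarrow> Psi2 n M I J (opL \<Lambda> \<Lambda>F l1 l2 I0 J0) = 0"
proof -
  assume a: "J \<in> seqs \<Lambda>" "length J0 < n"
  have sq: "\<And>m. J @ rep m \<in> seqs \<Lambda>" using a(1) rep_seqs2 by simp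
  show ?thesis unfolding Psi2_def using Phi2_L[OF L1 LF1 sq a(2)] by simp
qed

lemma Th3_L: "J \<in> seqs \<Lambda> \<Longrightarrow> a \<in> {1..\<Lambda>F} \<Longrightarrow> \<not> last_both_one I0 J0 \<Longrightarrow>
  Th3 n a c I J (opL \<Lambda> \<Lambda>F c' a' I0 J0) = (if c' = c \<and> a' = a then (if I0 = I \<and> J0 = J then 1 else 0) else 0)"
proof -
  assume sJ: "J \<in> seqs \<Lambda>" and aa: "a \<in> {1..\<Lambda>F}" and nl: "\<not> last_both_one I0 J0"
  have v: "valid \<Lambda> \<Lambda>F (a, J @ rep n, 1)" "valid \<Lambda> \<Lambda>F (a, butlast J @ rep n, 1)"
    using sJ aa LF1 rep_seqs2 seqs_butlast[OF sJ] by (auto simp: valid_def)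
  have ext: "\<not> (J0 = K @ rep t \<and> I0 = I' @ rep t)" if t: "1 \<le> t" for t K I'
  proof -
    obtain t' where t': "t = Suc t'" using t by (cases t) auto
    show ?thesis using nl unfolding t' rep_Suc_snoc last_both_one_def by auto
  qed
  have p1: "Pf I0 J0 (J @ rep n) (I @ rep n) \<longleftrightarrow> rpre I0 J0 I J" using Pf_pad[of I0 J0 J n I] ext by blast
  have p2: "Pf I0 J0 (butlast J @ rep n) (butlast I @ rep n) \<longleftrightarrow> rpre I0 J0 (butlast I) (butlast J)"
    using Pf_pad[of I0 J0 "butlast J" n "butlast I"] ext by blast
  show ?thesis
  proof (cases "c' = c \<and> a' = a")
    case True
    have e1: "opL \<Lambda> \<Lambda>F c' a' I0 J0 (a, J @ rep n, 1) (c, I @ rep n, 1) = (if rpre I0 J0 I J then 1 else 0)"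
      using True v p1 by (simp add: opL_app)
    have e2: "opL \<Lambda> \<Lambda>F c' a' I0 J0 (a, butlast J @ rep n, 1) (c, butlast I @ rep n, 1) = (if rpre I0 J0 (butlast I) (butlast J) then 1 else 0)"
      using True v p2 by (simp add: opL_app)
    show ?thesis unfolding Th3_def e1 e2 using True rpre_mob[of I0 J0 I J] by simp
  next
    case False
    have e1: "opL \<Lambda> \<Lambda>F c' a' I0 J0 (a, J @ rep n, 1) (c, I @ rep n, 1) = 0"
      using False by (auto simp: opL_app)
    have e2: "opL \<Lambda> \<Lambda>F c' a' I0 J0 (a, butlast J @ rep n, 1) (c, butlast I @ rep n, 1) = 0"
      using False by (auto simp: opL_app)
    show ?thesis unfolding Th3_def e1 e2 using False by simp
  qed
qed

lemma Th3_F: "length J0 < n \<Longrightarrow> Th3 n a c I J (opF \<Lambda> \<Lambda>F l1 l2 I0 J0 l3 l4) = 0"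
proof -
  assume l: "length J0 < n"
  have "J @ rep n \<noteq> J0" "butlast J @ rep n \<noteq> J0" using l by (auto dest: arg_cong[of _ _ length])
  then show ?thesis unfolding Th3_def opF_app by simp
qed

lemma Th3_R: "\<not> (l1 = 1 \<and> l2 = 1) \<Longrightarrow> Th3 n a c I J (opR \<Lambda> \<Lambda>F I0 J0 l1 l2) = 0"
  unfolding Th3_def opR_app by auto

lemma Th4_R: "J \<in> seqs \<Lambda> \<Longrightarrow> b \<in> {1..\<Lambda>F} \<Longrightarrow> Rc I0 J0 l1 l2 \<Longrightarrow>
  Th4 n b d I J (opR \<Lambda> \<Lambda>F I0 J0 l1 l2) = (if l1 = d \<and> l2 = b then (if I0 = I \<and> J0 = J then 1 else 0) else 0)"
proof -
  assume sJ: "J \<in> seqs \<Lambda>" and bb: "b \<in> {1..\<Lambda>F}" and rc: "Rc I0 J0 l1 l2"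
  have v: "valid \<Lambda> \<Lambda>F (1, rep n @ J, b)" "valid \<Lambda> \<Lambda>F (1, rep n @ tl J, b)"
    using sJ bb LF1 rep_seqs2 seqs_tl[OF sJ] by (auto simp: valid_def)
  have ext: "1 \<le> t \<Longrightarrow> \<not> (J0 = rep t @ K \<and> I0 = rep t @ I')" for t K I'
    using rc unfolding Rc_def first_both_one_def by (cases t) auto
  have q1: "Qf I0 J0 (rep n @ J) (rep n @ I) \<longleftrightarrow> lsuf I0 J0 I J" using Qf_pad[of I0 J0 n J I] ext by blast
  have q2: "Qf I0 J0 (rep n @ tl J) (rep n @ tl I) \<longleftrightarrow> lsuf I0 J0 (tl I) (tl J)"
    using Qf_pad[of I0 J0 n "tl J" "tl I"] ext by blast
  show ?thesis
  proof (cases "l1 = d \<and> l2 = b")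
    case True
    have e1: "opR \<Lambda> \<Lambda>F I0 J0 l1 l2 (1, rep n @ J, b) (1, rep n @ I, d) = (if lsuf I0 J0 I J then 1 else 0)"
      using True v q1 by (simp add: opR_app)
    have e2: "opR \<Lambda> \<Lambda>F I0 J0 l1 l2 (1, rep n @ tl J, b) (1, rep n @ tl I, d) = (if lsuf I0 J0 (tl I) (tl J) then 1 else 0)"
      using True v q2 by (simp add: opR_app)
    show ?thesis unfolding Th4_def e1 e2 using True lsuf_mob[of I0 J0 I J] by simp
  next
    case False
    have e1: "opR \<Lambda> \<Lambda>F I0 J0 l1 l2 (1, rep n @ J, b) (1, rep n @ I, d) = 0"
      using False by (auto simp: opR_app)
    have e2: "opR \<Lambda> \<Lambda>F I0 J0 l1 l2 (1, rep n @ tl J, b) (1, rep n @ tl I, d) = 0"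
      using False by (auto simp: opR_app)
    show ?thesis unfolding Th4_def e1 e2 using False by simp
  qed
qed

lemma Th4_F: "length J0 < n \<Longrightarrow> Th4 n b d I J (opF \<Lambda> \<Lambda>F l1 l2 I0 J0 l3 l4) = 0"
proof -
  assume l: "length J0 < n"
  have "rep n @ J \<noteq> J0" "rep n @ tl J \<noteq> J0" using l by (auto dest: arg_cong[of _ _ length])
  then show ?thesis unfolding Th4_def opF_app by simp
qed

end



lemma Rc3: "l1 \<noteq> 1 \<or> l2 \<noteq> 1 \<Longrightarrow> Rc [] [] l1 l2" by (auto simp: Rc_def first_both_one_def)
lemma Rc4: "I \<noteq> [] \<Longrightarrow> l1 \<noteq> 1 \<or> l2 \<noteq> 1 \<or> hd I \<noteq> 1 \<Longrightarrow> Rc I [] l1 l2" by (auto simp: Rc_def first_both_one_def)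
lemma Rc5: "J \<noteq> [] \<Longrightarrow> l1 \<noteq> 1 \<or> l2 \<noteq> 1 \<or> hd J \<noteq> 1 \<Longrightarrow> Rc [] J l1 l2" by (auto simp: Rc_def first_both_one_def)
lemma Rc6: "I \<noteq> [] \<Longrightarrow> J \<noteq> [] \<Longrightarrow> \<not> first_both_one I J \<Longrightarrow> Rc I J l1 l2" by (auto simp: Rc_def)
lemma Sc7: "Sc [] J" "Sc I []" by (auto simp: Sc_def first_both_one_def last_both_one_def)
lemma Sc8: "\<not> first_both_one I J \<Longrightarrow> \<not> last_both_one I J \<Longrightarrow> Sc I J" by (auto simp: Sc_def)

definition B4rep :: "nat \<Rightarrow> nat \<Rightarrow> nat \<Rightarrow> oper \<Rightarrow> bool" where
  "B4rep \<Lambda> \<Lambda>F N v \<longleftrightarrow>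
    (\<exists>l1 l2 I J l3 l4. v = opF \<Lambda> \<Lambda>F l1 l2 I J l3 l4 \<and> l1 \<in> {1..\<Lambda>F} \<and> l2 \<in> {1..\<Lambda>F} \<and> l3 \<in> {1..\<Lambda>F} \<and> l4 \<in> {1..\<Lambda>F}
       \<and> I \<in> seqs \<Lambda> \<and> J \<in> seqs \<Lambda> \<and> length I < N \<and> length J < N) \<or>
    (\<exists>l1 l2 I J. v = opL \<Lambda> \<Lambda>F l1 l2 I J \<and> l1 \<in> {1..\<Lambda>F} \<and> l2 \<in> {1..\<Lambda>F}
       \<and> I \<in> seqs \<Lambda> \<and> J \<in> seqs \<Lambda> \<and> \<not> last_both_one I J \<and> length I < N \<and> length J < N) \<or>
    (\<exists>I J l1 l2. v = opR \<Lambda> \<Lambda>F I J l1 l2 \<and> l1 \<in> {1..\<Lambda>F} \<and> l2 \<in> {1..\<Lambda>F}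
       \<and> I \<in> seqs \<Lambda> \<and> J \<in> seqs \<Lambda> \<and> Rc I J l1 l2 \<and> length I < N \<and> length J < N) \<or>
    (\<exists>I J. v = opS \<Lambda> \<Lambda>F I J \<and> I \<in> seqs \<Lambda> \<and> J \<in> seqs \<Lambda> \<and> Sc I J \<and> length I < N \<and> length J < N)"

lemma B4rep_mono: "B4rep \<Lambda> \<Lambda>F N v \<Longrightarrow> N \<le> N' \<Longrightarrow> B4rep \<Lambda> \<Lambda>F N' v"
  unfolding B4rep_def by (elim disjE exE conjE) (metis order.strict_trans2)+

lemma repF: "v = opF \<Lambda> \<Lambda>F l1 l2 I J l3 l4 \<Longrightarrow> l1 \<in> {1..\<Lambda>F} \<Longrightarrow> l2 \<in> {1..\<Lambda>F} \<Longrightarrow> l3 \<in> {1..\<Lambda>F} \<Longrightarrow> l4 \<in> {1..\<Lambda>F}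
  \<Longrightarrow> I \<in> seqs \<Lambda> \<Longrightarrow> J \<in> seqs \<Lambda> \<Longrightarrow> length I < N \<Longrightarrow> length J < N \<Longrightarrow> B4rep \<Lambda> \<Lambda>F N v"
  unfolding B4rep_def by blast

lemma repL: "v = opL \<Lambda> \<Lambda>F l1 l2 I J \<Longrightarrow> l1 \<in> {1..\<Lambda>F} \<Longrightarrow> l2 \<in> {1..\<Lambda>F}
  \<Longrightarrow> I \<in> seqs \<Lambda> \<Longrightarrow> J \<in> seqs \<Lambda> \<Longrightarrow> \<not> last_both_one I J \<Longrightarrow> length I < N \<Longrightarrow> length J < N \<Longrightarrow> B4rep \<Lambda> \<Lambda>F N v"
  unfolding B4rep_def by blast

lemma repR: "v = opR \<Lambda> \<Lambda>F I J l1 l2 \<Longrightarrow> l1 \<in> {1..\<Lambda>F} \<Longrightarrow> l2 \<in> {1..\<Lambda>F}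
  \<Longrightarrow> I \<in> seqs \<Lambda> \<Longrightarrow> J \<in> seqs \<Lambda> \<Longrightarrow> Rc I J l1 l2 \<Longrightarrow> length I < N \<Longrightarrow> length J < N \<Longrightarrow> B4rep \<Lambda> \<Lambda>F N v"
  unfolding B4rep_def by blast

lemma repS: "v = opS \<Lambda> \<Lambda>F I J \<Longrightarrow> I \<in> seqs \<Lambda> \<Longrightarrow> J \<in> seqs \<Lambda> \<Longrightarrow> Sc I J \<Longrightarrow> length I < N \<Longrightarrow> length J < N \<Longrightarrow> B4rep \<Lambda> \<Lambda>F N v"
  unfolding B4rep_def by blast

lemma B4_rep: "v \<in> B4 \<Lambda> \<Lambda>F \<Longrightarrow> \<exists>N. B4rep \<Lambda> \<Lambda>F N v"
proof -
  assume "v \<in> B4 \<Lambda> \<Lambda>F"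
  show ?thesis using \<open>v \<in> B4 \<Lambda> \<Lambda>F\<close> unfolding B4_def
  proof (elim UnE)
    assume "v \<in> {opF \<Lambda> \<Lambda>F l1 l2 I J l3 l4 |l1 l2 I J l3 l4. l1 \<in> {1..\<Lambda>F} \<and> l2 \<in> {1..\<Lambda>F} \<and> l3 \<in> {1..\<Lambda>F} \<and> l4 \<in> {1..\<Lambda>F} \<and> I \<in> seqs \<Lambda> \<and> J \<in> seqs \<Lambda>}"
    then obtain l1 l2 I J l3 l4 where h: "v = opF \<Lambda> \<Lambda>F l1 l2 I J l3 l4" "l1 \<in> {1..\<Lambda>F}" "l2 \<in> {1..\<Lambda>F}" "l3 \<in> {1..\<Lambda>F}" "l4 \<in> {1..\<Lambda>F}" "I \<in> seqs \<Lambda>" "J \<in> seqs \<Lambda>" by blast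
    then show ?thesis by (intro exI[of _ "Suc (length I + length J)"] repF[OF h(1)]) (use h in auto)
  next
    assume "v \<in> {opL \<Lambda> \<Lambda>F l1 l2 I J |l1 l2 I J. l1 \<in> {1..\<Lambda>F} \<and> l2 \<in> {1..\<Lambda>F} \<and> I \<in> seqs \<Lambda> \<and> J \<in> seqs \<Lambda> \<and> \<not> last_both_one I J}"
    then obtain l1 l2 I J where h: "v = opL \<Lambda> \<Lambda>F l1 l2 I J" "l1 \<in> {1..\<Lambda>F}" "l2 \<in> {1..\<Lambda>F}" "I \<in> seqs \<Lambda>" "J \<in> seqs \<Lambda>" "\<not> last_both_one I J" by blast
    then show ?thesis by (intro exI[of _ "Suc (length I + length J)"] repL[OF h(1)]) (use h in auto)
  next
    assume "v \<in> {opR \<Lambda> \<Lambda>F [] [] l1 l2 |l1 l2. l1 \<in> {1..\<Lambda>F} \<and> l2 \<in> {1..\<Lambda>F} \<and> (l1 \<noteq> 1 \<or> l2 \<noteq> 1)}"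
    then obtain l1 l2 where h: "v = opR \<Lambda> \<Lambda>F [] [] l1 l2" "l1 \<in> {1..\<Lambda>F}" "l2 \<in> {1..\<Lambda>F}" "l1 \<noteq> 1 \<or> l2 \<noteq> 1" by blast
    then show ?thesis by (intro exI[of _ "1"] repR[OF h(1)]) (use h Rc3[OF h(4)] in auto)
  next
    assume "v \<in> {opR \<Lambda> \<Lambda>F I [] l1 l2 |I l1 l2. l1 \<in> {1..\<Lambda>F} \<and> l2 \<in> {1..\<Lambda>F} \<and> I \<in> seqs \<Lambda> \<and> I \<noteq> [] \<and> (l1 \<noteq> 1 \<or> l2 \<noteq> 1 \<or> hd I \<noteq> 1)}"
    then obtain I l1 l2 where h: "v = opR \<Lambda> \<Lambda>F I [] l1 l2" "l1 \<in> {1..\<Lambda>F}" "l2 \<in> {1..\<Lambda>F}" "I \<in> seqs \<Lambda>" "I \<noteq> []" "l1 \<noteq> 1 \<or> l2 \<noteq> 1 \<or> hd I \<noteq> 1" by blast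
    then show ?thesis by (intro exI[of _ "Suc (length I)"] repR[OF h(1)]) (use h Rc4[OF h(5,6)] in auto)
  next
    assume "v \<in> {opR \<Lambda> \<Lambda>F [] J l1 l2 |J l1 l2. l1 \<in> {1..\<Lambda>F} \<and> l2 \<in> {1..\<Lambda>F} \<and> J \<in> seqs \<Lambda> \<and> J \<noteq> [] \<and> (l1 \<noteq> 1 \<or> l2 \<noteq> 1 \<or> hd J \<noteq> 1)}"
    then obtain J l1 l2 where h: "v = opR \<Lambda> \<Lambda>F [] J l1 l2" "l1 \<in> {1..\<Lambda>F}" "l2 \<in> {1..\<Lambda>F}" "J \<in> seqs \<Lambda>" "J \<noteq> []" "l1 \<noteq> 1 \<or> l2 \<noteq> 1 \<or> hd J \<noteq> 1" by blast
    then show ?thesis by (intro exI[of _ "Suc (length J)"] repR[OF h(1)]) (use h Rc5[OF h(5,6)] in auto)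
  next
    assume "v \<in> {opR \<Lambda> \<Lambda>F I J l1 l2 |I J l1 l2. l1 \<in> {1..\<Lambda>F} \<and> l2 \<in> {1..\<Lambda>F} \<and> I \<in> seqs \<Lambda> \<and> J \<in> seqs \<Lambda> \<and> I \<noteq> [] \<and> J \<noteq> [] \<and> \<not> first_both_one I J}"
    then obtain I J l1 l2 where h: "v = opR \<Lambda> \<Lambda>F I J l1 l2" "l1 \<in> {1..\<Lambda>F}" "l2 \<in> {1..\<Lambda>F}" "I \<in> seqs \<Lambda>" "J \<in> seqs \<Lambda>" "I \<noteq> []" "J \<noteq> []" "\<not> first_both_one I J" by blast
    then show ?thesis by (intro exI[of _ "Suc (length I + length J)"] repR[OF h(1)]) (use h Rc6[OF h(6,7,8)] in auto)
  next
    assume "v \<in> {opS \<Lambda> \<Lambda>F [] []}"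
    then have h: "v = opS \<Lambda> \<Lambda>F [] []" by simp
    then show ?thesis by (intro exI[of _ "1"] repS[OF h(1)]) (use Sc7 in auto)
  next
    assume "v \<in> {opS \<Lambda> \<Lambda>F I [] |I. I \<in> seqs \<Lambda> \<and> I \<noteq> []}"
    then obtain I where h: "v = opS \<Lambda> \<Lambda>F I []" "I \<in> seqs \<Lambda>" by blast
    then show ?thesis by (intro exI[of _ "Suc (length I)"] repS[OF h(1)]) (use h Sc7 in auto)
  next
    assume "v \<in> {opS \<Lambda> \<Lambda>F [] J |J. J \<in> seqs \<Lambda> \<and> J \<noteq> []}"
    then obtain J where h: "v = opS \<Lambda> \<Lambda>F [] J" "J \<in> seqs \<Lambda>" by blast
    then show ?thesis by (intro exI[of _ "Suc (length J)"] repS[OF h(1)]) (use h Sc7 in auto)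
  next
    assume "v \<in> {opS \<Lambda> \<Lambda>F I J |I J. I \<in> seqs \<Lambda> \<and> J \<in> seqs \<Lambda> \<and> I \<noteq> [] \<and> J \<noteq> [] \<and> \<not> first_both_one I J \<and> \<not> last_both_one I J}"
    then obtain I J where h: "v = opS \<Lambda> \<Lambda>F I J" "I \<in> seqs \<Lambda>" "J \<in> seqs \<Lambda>" "\<not> first_both_one I J" "\<not> last_both_one I J" by blast
    then show ?thesis by (intro exI[of _ "Suc (length I + length J)"] repS[OF h(1)]) (use h Sc8[OF h(4,5)] in auto)
  qed
qed

lemma B4_bound: "finite t \<Longrightarrow> t \<subseteq> B4 \<Lambda> \<Lambda>F \<Longrightarrow> \<exists>N. \<forall>v\<in>t. B4rep \<Lambda> \<Lambda>F N v"
proof (induction t rule: finite_induct)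
  case empty then show ?case by simp
next
  case (insert x F)
  then obtain N1 where N1: "\<forall>v\<in>F. B4rep \<Lambda> \<Lambda>F N1 v" by auto
  obtain N2 where N2: "B4rep \<Lambda> \<Lambda>F N2 x" using B4_rep insert.prems by blast
  have "\<forall>v\<in>insert x F. B4rep \<Lambda> \<Lambda>F (max N1 N2) v"
    using N1 N2 B4rep_mono by (metis insert_iff max.cobounded1 max.cobounded2)
  then show ?case by blast
qed

lemma B4rep_cases:
  assumes "B4rep \<Lambda> \<Lambda>F N v"
  obtains (F) l1 l2 I J l3 l4 where "v = opF \<Lambda> \<Lambda>F l1 l2 I J l3 l4" "l1 \<in> {1..\<Lambda>F}" "l2 \<in> {1..\<Lambda>F}" "l3 \<in> {1..\<Lambda>F}" "l4 \<in> {1..\<Lambda>F}"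
       "I \<in> seqs \<Lambda>" "J \<in> seqs \<Lambda>" "length I < N" "length J < N"
  | (L) l1 l2 I J where "v = opL \<Lambda> \<Lambda>F l1 l2 I J" "l1 \<in> {1..\<Lambda>F}" "l2 \<in> {1..\<Lambda>F}"
       "I \<in> seqs \<Lambda>" "J \<in> seqs \<Lambda>" "\<not> last_both_one I J" "length I < N" "length J < N"
  | (R) I J l1 l2 where "v = opR \<Lambda> \<Lambda>F I J l1 l2" "l1 \<in> {1..\<Lambda>F}" "l2 \<in> {1..\<Lambda>F}"
       "I \<in> seqs \<Lambda>" "J \<in> seqs \<Lambda>" "Rc I J l1 l2" "length I < N" "length J < N"
  | (S) I J where "v = opS \<Lambda> \<Lambda>F I J" "I \<in> seqs \<Lambda>" "J \<in> seqs \<Lambda>" "Sc I J" "length I < N" "length J < N"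
  using assms unfolding B4rep_def by blast

definition kills :: "oper set \<Rightarrow> (oper \<Rightarrow> complex) \<Rightarrow> (oper \<Rightarrow> complex) \<Rightarrow> bool" where
  "kills t u \<Phi> \<longleftrightarrow> (\<Sum>v\<in>t. u v * \<Phi> v) = 0"

lemma kills_entry: "(\<And>x y. (\<Sum>v\<in>t. u v * v x y) = 0) \<Longrightarrow> kills t u (\<lambda>A. A x y)"
  by (simp add: kills_def)

lemma kills_diff: "kills t u \<Phi> \<Longrightarrow> kills t u \<Psi> \<Longrightarrow> kills t u (\<lambda>A. \<Phi> A - \<Psi> A)"
  by (simp add: kills_def right_diff_distrib sum_subtractf)

lemma kills_if: "kills t u \<Phi> \<Longrightarrow> kills t u (\<lambda>A. if c then \<Phi> A else 0)"
  by (cases c) (simp_all add: kills_def)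

lemma kills_sum: "(\<And>m. m \<in> S \<Longrightarrow> kills t u (\<Phi> m)) \<Longrightarrow> kills t u (\<lambda>A. \<Sum>m\<in>S. \<Phi> m A)"
  unfolding kills_def by (simp add: sum_distrib_left) (subst sum.swap, simp)

lemma kills_extract: "finite t \<Longrightarrow> kills t u \<Phi> \<Longrightarrow> g \<in> t \<Longrightarrow> \<Phi> g \<noteq> 0 \<Longrightarrow>
   (\<And>v. v \<in> t \<Longrightarrow> v \<noteq> g \<Longrightarrow> u v * \<Phi> v = 0) \<Longrightarrow> u g = 0"
proof -
  assume fin: "finite t" and k: "kills t u \<Phi>" and g: "g \<in> t" and nz: "\<Phi> g \<noteq> 0"
    and o: "\<And>v. v \<in> t \<Longrightarrow> v \<noteq> g \<Longrightarrow> u v * \<Phi> v = 0"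
  have "(\<Sum>v\<in>t. u v * \<Phi> v) = u g * \<Phi> g + (\<Sum>v\<in>t-{g}. u v * \<Phi> v)"
    using fin g by (simp add: sum.remove)
  also have "(\<Sum>v\<in>t-{g}. u v * \<Phi> v) = 0" using o by (intro sum.neutral) auto
  finally show "u g = 0" using k nz by (simp add: kills_def)
qed

context
  fixes t :: "oper set" and u :: "oper \<Rightarrow> complex"
  assumes Z: "\<And>x y. (\<Sum>v\<in>t. u v * v x y) = 0"
begin

lemma kills_T2: "kills t u (T2 n I J)"
proof -
  have "T2 n I J = (\<lambda>A. A (1, rep n @ J, 1) (1, rep n @ I, 1) -
     (if last (rep n @ J) = last (rep n @ I) then A (1, butlast (rep n @ J), 1) (1, butlast (rep n @ I), 1) else 0))"
    by (simp add: fun_eq_iff T2_def)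
  then show ?thesis by (simp only:) (intro kills_diff kills_if kills_entry Z)
qed

lemma kills_Phi2: "kills t u (Phi2 n I J)"
proof -
  have "Phi2 n I J = (\<lambda>A. T2 n I J A - (if I \<noteq> [] \<and> J \<noteq> [] \<and> hd I = hd J then T2 n (tl I) (tl J) A else 0))"
    by (simp add: fun_eq_iff Phi2_def)
  then show ?thesis by (simp only:) (intro kills_diff kills_if kills_T2)
qed

lemma kills_Psi2: "kills t u (Psi2 n M I J)"
proof -
  have "Psi2 n M I J = (\<lambda>A. \<Sum>m\<in>{1..M}. Phi2 n (I @ rep m) (J @ rep m) A)"
    by (simp add: fun_eq_iff Psi2_def)
  then show ?thesis by (simp only:) (intro kills_sum kills_Phi2)
qed

lemma kills_Th3: "kills t u (Th3 n a c I J)"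
proof -
  have "Th3 n a c I J = (\<lambda>A. A (a, J @ rep n, 1) (c, I @ rep n, 1) -
     (if I \<noteq> [] \<and> J \<noteq> [] \<and> last I = last J then A (a, butlast J @ rep n, 1) (c, butlast I @ rep n, 1) else 0))"
    by (simp add: fun_eq_iff Th3_def)
  then show ?thesis by (simp only:) (intro kills_diff kills_if kills_entry Z)
qed

lemma kills_Th4: "kills t u (Th4 n b d I J)"
proof -
  have "Th4 n b d I J = (\<lambda>A. A (1, rep n @ J, b) (1, rep n @ I, d) -
     (if I \<noteq> [] \<and> J \<noteq> [] \<and> hd I = hd J then A (1, rep n @ tl J, b) (1, rep n @ tl I, d) else 0))"
    by (simp add: fun_eq_iff Th4_def)
  then show ?thesis by (simp only:) (intro kills_diff kills_if kills_entry Z)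
qed

lemma kills_pt: "kills t u (\<lambda>A. A x y)"
  by (intro kills_entry Z)

end



theorem B4_indep:
  fixes \<Lambda> \<Lambda>F :: nat
  assumes L1: "\<Lambda> \<ge> 1" and LF1: "\<Lambda>F \<ge> 1"
  shows "\<not> Op.dependent (B4 \<Lambda> \<Lambda>F)"
proof
  assume "Op.dependent (B4 \<Lambda> \<Lambda>F)"
  then obtain t u where fin: "finite t" and sub: "t \<subseteq> B4 \<Lambda> \<Lambda>F"
    and s0: "(\<Sum>v\<in>t. opscale (u v) v) = 0" and nz: "\<exists>v\<in>t. u v \<noteq> 0"
    unfolding Op.dependent_explicit by blast
  have Z: "\<And>x y. (\<Sum>v\<in>t. u v * v x y) = 0"
  proof -
    fix x y
    have "(\<Sum>v\<in>t. opscale (u v) v) x y = 0" using s0 by simp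
    then show "(\<Sum>v\<in>t. u v * v x y) = 0" by (simp add: sum_app opscale_def)
  qed
  obtain N where bnd: "\<forall>v\<in>t. B4rep \<Lambda> \<Lambda>F N v" using B4_bound[OF fin sub] by blast
  define n where "n = N + 3"
  define M where "M = N + 1"
  have n1: "1 \<le> n" unfolding n_def by simp
  have oneF: "(1::nat) \<in> {1..\<Lambda>F}" using LF1 by simp

  have P2a: "u (opR \<Lambda> \<Lambda>F I J 1 1) = 0" if sq: "I \<in> seqs \<Lambda>" "J \<in> seqs \<Lambda>" and rc: "Rc I J 1 1"
     and gt: "opR \<Lambda> \<Lambda>F I J 1 1 \<in> t" for I J
  proof (rule kills_extract[OF fin kills_Psi2[OF Z] gt])
    have "I \<noteq> I @ rep M" unfolding M_def by simp
    then show "Psi2 n M I J (opR \<Lambda> \<Lambda>F I J 1 1) \<noteq> 0"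
      using Psi2_R[OF L1 LF1 sq(2) n1 rc, of M I] by simp
  next
    fix v assume vt: "v \<in> t" and vg: "v \<noteq> opR \<Lambda> \<Lambda>F I J 1 1"
    from bnd vt have "B4rep \<Lambda> \<Lambda>F N v" by blast
    then show "u v * Psi2 n M I J v = 0"
    proof (cases rule: B4rep_cases)
      case (F l1 l2 I0 J0 l3 l4)
      then show ?thesis using Psi2_F[OF L1 LF1, of J0 n M I J] unfolding n_def by simp
    next
      case (L l1 l2 I0 J0)
      then show ?thesis using Psi2_L[OF L1 LF1 sq(2), of J0 n M I] unfolding n_def by simp
    next
      case (R I0 J0 l1 l2)
      have "\<not> (I0 = I @ rep M \<and> J0 = J @ rep M)" using R(7) unfolding M_def by auto
      moreover have "\<not> (l1 = 1 \<and> l2 = 1 \<and> I0 = I \<and> J0 = J)" using R(1) vg by auto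
      ultimately show ?thesis using R Psi2_R[OF L1 LF1 sq(2) n1 R(6), of M I] by auto
    next
      case (S I0 J0)
      then show ?thesis using Psi2_S[OF L1 LF1 sq(2) n1 S(4), of M I] by simp
    qed
  qed

  have P2b: "u (opS \<Lambda> \<Lambda>F I J) = 0" if sq: "I \<in> seqs \<Lambda>" "J \<in> seqs \<Lambda>" and sc: "Sc I J"
     and gt: "opS \<Lambda> \<Lambda>F I J \<in> t" for I J
  proof (rule kills_extract[OF fin kills_Phi2[OF Z] gt])
    show "Phi2 n I J (opS \<Lambda> \<Lambda>F I J) \<noteq> 0" using Phi2_S[OF L1 LF1 sq(2) n1 sc, of I] by simp
  next
    fix v assume vt: "v \<in> t" and vg: "v \<noteq> opS \<Lambda> \<Lambda>F I J"
    from bnd vt have "B4rep \<Lambda> \<Lambda>F N v" by blast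
    then show "u v * Phi2 n I J v = 0"
    proof (cases rule: B4rep_cases)
      case (F l1 l2 I0 J0 l3 l4)
      then show ?thesis using Phi2_F[OF L1 LF1, of J0 n I J] unfolding n_def by simp
    next
      case (L l1 l2 I0 J0)
      then show ?thesis using Phi2_L[OF L1 LF1 sq(2), of J0 n I] unfolding n_def by simp
    next
      case (R I0 J0 l1 l2)
      show ?thesis
      proof (cases "l1 = 1 \<and> l2 = 1")
        case True
        then have "u v = 0" using P2a[of I0 J0] R vt by auto
        then show ?thesis by simp
      next
        case False
        have "Phi2 n I J v = 0" unfolding R(1) Phi2_R[OF L1 LF1 sq(2) n1 R(6), of I] by (simp only: if_not_P[OF False])
        then show ?thesis by simp
      qed
    next
      case (S I0 J0)
      have ne: "\<not> (I0 = I \<and> J0 = J)" using S(1) vg by auto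
      have "Phi2 n I J v = 0" unfolding S(1) Phi2_S[OF L1 LF1 sq(2) n1 S(4), of I] by (simp only: if_not_P[OF ne])
      then show ?thesis by simp
    qed
  qed

  have P3: "u (opL \<Lambda> \<Lambda>F c a I J) = 0" if sq: "I \<in> seqs \<Lambda>" "J \<in> seqs \<Lambda>" and nl: "\<not> last_both_one I J"
     and ac: "a \<in> {1..\<Lambda>F}" "c \<in> {1..\<Lambda>F}" and gt: "opL \<Lambda> \<Lambda>F c a I J \<in> t" for I J a c
  proof (rule kills_extract[OF fin kills_Th3[OF Z] gt])
    show "Th3 n a c I J (opL \<Lambda> \<Lambda>F c a I J) \<noteq> 0" using Th3_L[OF L1 LF1 sq(2) ac(1) nl, of n c I c a] by simp
  next
    fix v assume vt: "v \<in> t" and vg: "v \<noteq> opL \<Lambda> \<Lambda>F c a I J"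
    from bnd vt have "B4rep \<Lambda> \<Lambda>F N v" by blast
    then show "u v * Th3 n a c I J v = 0"
    proof (cases rule: B4rep_cases)
      case (F l1 l2 I0 J0 l3 l4)
      then show ?thesis using Th3_F[OF L1 LF1, of J0 n a c I J] unfolding n_def by simp
    next
      case (L l1 l2 I0 J0)
      have "\<not> (l1 = c \<and> l2 = a \<and> I0 = I \<and> J0 = J)" using L(1) vg by auto
      then show ?thesis using L Th3_L[OF L1 LF1 sq(2) ac(1) L(6), of n c I l1 l2] by auto
    next
      case (R I0 J0 l1 l2)
      show ?thesis
      proof (cases "l1 = 1 \<and> l2 = 1")
        case True
        then have "u v = 0" using P2a[of I0 J0] R vt by auto
        then show ?thesis by simp
      next
        case False
        then show ?thesis using Th3_R[OF L1 LF1 False] R(1) by simp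
      qed
    next
      case (S I0 J0)
      then have "u v = 0" using P2b[of I0 J0] vt by auto
      then show ?thesis by simp
    qed
  qed

  have P4: "u (opR \<Lambda> \<Lambda>F I J d b) = 0" if sq: "I \<in> seqs \<Lambda>" "J \<in> seqs \<Lambda>" and rc: "Rc I J d b"
     and bd: "b \<in> {1..\<Lambda>F}" "d \<in> {1..\<Lambda>F}" and gt: "opR \<Lambda> \<Lambda>F I J d b \<in> t" for I J b d
  proof (rule kills_extract[OF fin kills_Th4[OF Z] gt])
    show "Th4 n b d I J (opR \<Lambda> \<Lambda>F I J d b) \<noteq> 0" using Th4_R[OF L1 LF1 sq(2) bd(1) rc, of n d I] by simp
  next
    fix v assume vt: "v \<in> t" and vg: "v \<noteq> opR \<Lambda> \<Lambda>F I J d b"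
    from bnd vt have "B4rep \<Lambda> \<Lambda>F N v" by blast
    then show "u v * Th4 n b d I J v = 0"
    proof (cases rule: B4rep_cases)
      case (F l1 l2 I0 J0 l3 l4)
      then show ?thesis using Th4_F[OF L1 LF1, of J0 n b d I J] unfolding n_def by simp
    next
      case (L l1 l2 I0 J0)
      then have "u v = 0" using P3[of I0 J0 l2 l1] vt by auto
      then show ?thesis by simp
    next
      case (R I0 J0 l1 l2)
      have "\<not> (l1 = d \<and> l2 = b \<and> I0 = I \<and> J0 = J)" using R(1) vg by auto
      then show ?thesis using R Th4_R[OF L1 LF1 sq(2) bd(1) R(6), of n d I] by auto
    next
      case (S I0 J0)
      then have "u v = 0" using P2b[of I0 J0] vt by auto
      then show ?thesis by simp
    qed
  qed

  have P5: "u (opF \<Lambda> \<Lambda>F l1 l2 I J l3 l4) = 0" if sq: "I \<in> seqs \<Lambda>" "J \<in> seqs \<Lambda>"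
     and ls: "l1 \<in> {1..\<Lambda>F}" "l2 \<in> {1..\<Lambda>F}" "l3 \<in> {1..\<Lambda>F}" "l4 \<in> {1..\<Lambda>F}"
     and gt: "opF \<Lambda> \<Lambda>F l1 l2 I J l3 l4 \<in> t" for I J l1 l2 l3 l4
  proof (rule kills_extract[OF fin kills_pt[OF Z] gt])
    have v: "valid \<Lambda> \<Lambda>F (l2, J, l4)" using sq ls by (simp add: valid_def)
    show "opF \<Lambda> \<Lambda>F l1 l2 I J l3 l4 (l2, J, l4) (l1, I, l3) \<noteq> 0" using v by (simp add: opF_app)
  next
    fix v assume vt: "v \<in> t" and vg: "v \<noteq> opF \<Lambda> \<Lambda>F l1 l2 I J l3 l4"
    from bnd vt have "B4rep \<Lambda> \<Lambda>F N v" by blast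
    then show "u v * v (l2, J, l4) (l1, I, l3) = 0"
    proof (cases rule: B4rep_cases)
      case (F m1 m2 I0 J0 m3 m4)
      have "\<not> (m1 = l1 \<and> m2 = l2 \<and> I0 = I \<and> J0 = J \<and> m3 = l3 \<and> m4 = l4)" using F(1) vg by auto
      then show ?thesis using F(1) by (auto simp: opF_app)
    next
      case (L m1 m2 I0 J0)
      then have "u v = 0" using P3[of I0 J0 m2 m1] vt by auto
      then show ?thesis by simp
    next
      case (R I0 J0 m1 m2)
      then have "u v = 0" using P4[of I0 J0 m1 m2] vt by auto
      then show ?thesis by simp
    next
      case (S I0 J0)
      then have "u v = 0" using P2b[of I0 J0] vt by auto
      then show ?thesis by simp
    qed
  qed

  have "u v = 0" if vt: "v \<in> t" for v
  proof -
    from bnd vt have "B4rep \<Lambda> \<Lambda>F N v" by blast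
    then show ?thesis
    proof (cases rule: B4rep_cases)
      case (F l1 l2 I0 J0 l3 l4) then show ?thesis using P5 vt by blast
    next
      case (L l1 l2 I0 J0) then show ?thesis using P3 vt by blast
    next
      case (R I0 J0 l1 l2) then show ?thesis using P4 vt by blast
    next
      case (S I0 J0) then show ?thesis using P2b vt by blast
    qed
  qed
  then show False using nz by blast
qed



theorem proposition2:
  fixes \<Lambda> \<Lambda>F :: nat
  assumes "\<Lambda> \<ge> 1" and "\<Lambda>F \<ge> 1"
  shows "\<not> module.dependent opscale (B4 \<Lambda> \<Lambda>F)
         \<and> module.span opscale (B4 \<Lambda> \<Lambda>F) = Ghat \<Lambda> \<Lambda>F"
  using B4_indep[OF assms] span_B4[OF assms] by simp

end
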